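(* Let $X \subseteq \mathbb{R}^n$ be a compact basic semi-algebraic set, let $Z \subseteq X$ be a compact basic semi-algebraic set, and let $f:\mathbb{R}^n\to\mathbb{R}^n$ be a polynomial map, defining the discrete-time system $x_{t+1}=f(x_t)$. Let $X_0^\infty$ be the backward reachable set of $Z$ within $X$ (defined in the context). Consider the primal linear program $$p := \sup \int_X 1\, d\mu_0 \quad\text{s.t.}\quad \nu + \mu = f_*\nu + \mu_0,\quad \mu_0+\hat\mu_0=\lambda_X,\quad \mu_0,\hat\mu_0,\nu\in\mathcal{M}_+(X),\quad \mu\in\mathcal{M}_+(Z),$$ and the dual linear program $$d := \inf \int_X w\, d\lambda_X \quad\text{s.t.}\quad v(x)-v(f(x))\ge 0\ \forall x\in X,\quad w(x)-v(x)-1\ge 0\ \forall x\in X,\quad w(x)\ge 0\ \forall x\in X,\quad v(x)\ge 0\ \forall x\in Z,\quad v,w\in\mathcal{C}(X).$$ Suppose there exists a constant $M>0$ such that for every feasible solution $(\mu_0,\hat\mu_0,\nu,\mu)$ of the primal program, $\int_X 1\,d\nu < M$. Then: (a) If $f(X)\subseteq X$, the primal program admits an optimal solution $(\mu_0^*,\hat\mu_0^*,\nu^*,\mu^* )$ with $\mu_0^*=\lambda_{X_0^\infty}$, and its optimal value equals the Lebesgue volume of $X_0^\infty$. (b) There is no duality gap between the primal and the dual programs, i.e. $p=d$.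
   Context: A basic semi-algebraic set is a set of the form $\{x\in\mathbb{R}^n: h_i(x)\ge 0,\ i=1,\dots,k\}$ with $h_i$ real polynomials. For $T\in\mathbb{N}$, the $T$-step backward reachable set is $X_0^T:=\{x_0\in X:\ f^t(x_0)\in Z \text{ for some } 0\le t\le T,\ \text{and } f^{s}(x_0)\in X \text{ for all } 0\le s\le t\}$, where $f^t$ denotes the $t$-fold composition; $X_0^\infty:=\bigcup_{T\ge 0}X_0^T$. $\mathcal{C}(X)$ is the space of continuous real functions on $X$; $\mathcal{M}_+(A)$ denotes the cone of finite nonnegative Borel measures supported on $A$. $\lambda_A$ denotes the restriction of Lebesgue measure to a Borel set $A$. For a measurable map $p$ and measure $\nu$, the pushforward is $p_*\nu(B):=\nu(p^{-1}(B))$. The equation $\nu+\mu=f_*\nu+\mu_0$ is an equality of Borel measures on $\mathbb{R}^n$. *)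

theory Defs
  imports "HOL-Analysis.Analysis"
begin

inductive_set poly_fun :: "((real ^ 'n) \<Rightarrow> real) set" where
  const: "(\<lambda>x. c) \<in> poly_fun"
| coord: "(\<lambda>x. x $ i) \<in> poly_fun"
| add: "p \<in> poly_fun \<Longrightarrow> q \<in> poly_fun \<Longrightarrow> (\<lambda>x. p x + q x) \<in> poly_fun"
| mult: "p \<in> poly_fun \<Longrightarrow> q \<in> poly_fun \<Longrightarrow> (\<lambda>x. p x * q x) \<in> poly_fun"

definition poly_map :: "((real ^ 'n) \<Rightarrow> (real ^ 'n)) \<Rightarrow> bool" where
  "poly_map f \<longleftrightarrow> (\<forall>i. (\<lambda>x. f x $ i) \<in> poly_fun)"

definition basic_semialgebraic :: "(real ^ 'n) set \<Rightarrow> bool" where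
  "basic_semialgebraic S \<longleftrightarrow>
     (\<exists>hs :: ((real ^ 'n) \<Rightarrow> real) list. (\<forall>h\<in>set hs. h \<in> poly_fun) \<and>
        S = {x. \<forall>h\<in>set hs. h x \<ge> 0})"

definition backreach :: "(real ^ 'n) set \<Rightarrow> (real ^ 'n) set \<Rightarrow> ((real ^ 'n) \<Rightarrow> (real ^ 'n)) \<Rightarrow> nat \<Rightarrow> (real ^ 'n) set" where
  "backreach X Z f T = {x0 \<in> X. \<exists>t\<le>T. (f ^^ t) x0 \<in> Z \<and> (\<forall>s\<le>t. (f ^^ s) x0 \<in> X)}"

definition backreach_inf :: "(real ^ 'n) set \<Rightarrow> (real ^ 'n) set \<Rightarrow> ((real ^ 'n) \<Rightarrow> (real ^ 'n)) \<Rightarrow> (real ^ 'n) set" where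
  "backreach_inf X Z f = (\<Union>T. backreach X Z f T)"

text \<open>Finite nonnegative Borel measure on R^n supported on A (element of M_+(A)).\<close>
definition meas_on :: "(real ^ 'n) set \<Rightarrow> (real ^ 'n) measure \<Rightarrow> bool" where
  "meas_on A m \<longleftrightarrow> sets m = sets borel \<and> finite_measure m \<and> emeasure m (UNIV - A) = 0"

definition primal_feasible :: "(real ^ 'n) set \<Rightarrow> (real ^ 'n) set \<Rightarrow> ((real ^ 'n) \<Rightarrow> (real ^ 'n))
    \<Rightarrow> (real ^ 'n) measure \<Rightarrow> (real ^ 'n) measure \<Rightarrow> (real ^ 'n) measure \<Rightarrow> (real ^ 'n) measure \<Rightarrow> bool" where
  "primal_feasible X Z f \<mu>0 \<mu>0h \<nu> \<mu> \<longleftrightarrow>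
     meas_on X \<mu>0 \<and> meas_on X \<mu>0h \<and> meas_on X \<nu> \<and> meas_on Z \<mu> \<and>
     (\<forall>B\<in>sets borel. emeasure \<nu> B + emeasure \<mu> B = emeasure (distr \<nu> borel f) B + emeasure \<mu>0 B) \<and>
     (\<forall>B\<in>sets borel. emeasure \<mu>0 B + emeasure \<mu>0h B = emeasure lborel (B \<inter> X))"

definition primal_value :: "(real ^ 'n) set \<Rightarrow> (real ^ 'n) set \<Rightarrow> ((real ^ 'n) \<Rightarrow> (real ^ 'n)) \<Rightarrow> real" where
  "primal_value X Z f = Sup {measure \<mu>0 X | \<mu>0 \<mu>0h \<nu> \<mu>. primal_feasible X Z f \<mu>0 \<mu>0h \<nu> \<mu>}"

definition dual_feasible :: "(real ^ 'n) set \<Rightarrow> (real ^ 'n) set \<Rightarrow> ((real ^ 'n) \<Rightarrow> (real ^ 'n))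
    \<Rightarrow> ((real ^ 'n) \<Rightarrow> real) \<Rightarrow> ((real ^ 'n) \<Rightarrow> real) \<Rightarrow> bool" where
  "dual_feasible X Z f v w \<longleftrightarrow>
     continuous_on X v \<and> continuous_on X w \<and>
     (\<forall>x\<in>X. v x - v (f x) \<ge> 0) \<and>
     (\<forall>x\<in>X. w x - v x - 1 \<ge> 0) \<and>
     (\<forall>x\<in>X. w x \<ge> 0) \<and>
     (\<forall>x\<in>Z. v x \<ge> 0)"

definition dual_value :: "(real ^ 'n) set \<Rightarrow> (real ^ 'n) set \<Rightarrow> ((real ^ 'n) \<Rightarrow> (real ^ 'n)) \<Rightarrow> real" where
  "dual_value X Z f = Inf {(LINT x:X|lborel. w x) | v w. dual_feasible X Z f v w}"

end

theory Submission
  imports Defs "HOL-Probability.Probability"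
begin

lemma poly_fun_cont: "p \<in> poly_fun \<Longrightarrow> continuous_on UNIV p"
  by (induction rule: poly_fun.induct) (auto intro!: continuous_intros continuous_on_component)

lemma poly_map_cont: assumes "poly_map f" shows "continuous_on UNIV f"
proof -
  have "continuous_on UNIV (\<lambda>x. \<chi> i. f x $ i)"
    using assms poly_fun_cont unfolding poly_map_def by (intro continuous_on_vec_lambda) auto
  then show ?thesis by simp
qed

lemma funpow_cont: fixes f :: "'a::topological_space \<Rightarrow> 'a" assumes "continuous_on UNIV f" shows "continuous_on UNIV (f ^^ t)"
proof (induction t)
  case (Suc t)
  have "continuous_on UNIV (f \<circ> (f ^^ t))"
    by (rule continuous_on_compose[OF Suc]) (use assms continuous_on_subset in blast)
  then show ?case by simp
qed simp

definition msum :: "'a measure \<Rightarrow> nat \<Rightarrow> (nat \<Rightarrow> 'a measure) \<Rightarrow> 'a measure" where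
  "msum M N m = measure_of (space M) (sets M) (\<lambda>A. \<Sum>i<N. emeasure (m i) A)"

lemma sets_msum[simp]: "sets (msum M N m) = sets M"
  unfolding msum_def by (simp add: sets.space_closed)

lemma emeasure_msum:
  assumes "\<And>i. sets (m i) = sets M" "A \<in> sets M"
  shows "emeasure (msum M N m) A = (\<Sum>i<N. emeasure (m i) A)"
  unfolding msum_def
proof (rule emeasure_measure_of_sigma)
  show "sigma_algebra (space M) (sets M)" by (rule sets.sigma_algebra_axioms)
  show "positive (sets M) (\<lambda>A. \<Sum>i<N. emeasure (m i) A)" by (auto simp: positive_def)
  show "countably_additive (sets M) (\<lambda>A. \<Sum>i<N. emeasure (m i) A)"
    unfolding countably_additive_def
  proof (intro allI impI)
    fix F :: "nat \<Rightarrow> _" assume F: "range F \<subseteq> sets M" "disjoint_family F" "\<Union> (range F) \<in> sets M"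
    have "(\<Sum>n. \<Sum>i<N. emeasure (m i) (F n)) = (\<Sum>i<N. \<Sum>n. emeasure (m i) (F n))"
      by (rule suminf_sum) auto
    also have "\<dots> = (\<Sum>i<N. emeasure (m i) (\<Union> (range F)))"
      using F assms(1) by (intro sum.cong refl suminf_emeasure) auto
    finally show "(\<Sum>n. \<Sum>i<N. emeasure (m i) (F n)) = (\<Sum>i<N. emeasure (m i) (\<Union> (range F)))" .
  qed
qed (use assms in auto)


locale setting =
  fixes X Z :: "(real ^ 'n) set" and f :: "real ^ 'n \<Rightarrow> real ^ 'n" and T :: nat
  assumes cX: "compact X" and cZ: "compact Z" and ZX: "Z \<subseteq> X"
    and cont: "continuous_on UNIV f"
    and exit: "\<forall>x\<in>X. \<exists>s\<le>T. (f ^^ s) x \<notin> X"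
begin

abbreviation "R \<equiv> backreach X Z f T"

lemma contt: "continuous_on UNIV (f ^^ t)" using funpow_cont[OF cont] .

lemma meas_f[measurable]: "f \<in> borel_measurable borel"
  using cont by (intro borel_measurable_continuous_onI) auto

lemma meas_ft[measurable]: "(f ^^ t) \<in> borel_measurable borel"
  using contt by (intro borel_measurable_continuous_onI) auto

lemma pre_sets: "B \<in> sets borel \<Longrightarrow> f -` B \<in> sets borel"
  using measurable_sets[OF meas_f, of B] by simp

lemma pre_sets_t: "B \<in> sets borel \<Longrightarrow> (f ^^ t) -` B \<in> sets borel"
  using measurable_sets[OF meas_ft, of B t] by simp

lemma br_le: "x \<in> backreach X Z f t \<Longrightarrow> x \<in> R"
  unfolding backreach_def
proof clarify
  fix t' assume x: "x \<in> X" "t' \<le> t" "(f ^^ t') x \<in> Z" "\<forall>s\<le>t'. (f ^^ s) x \<in> X"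
  show "\<exists>t\<le>T. (f ^^ t) x \<in> Z \<and> (\<forall>s\<le>t. (f ^^ s) x \<in> X)"
  proof (cases "t' \<le> T")
    case True then show ?thesis using x by blast
  next
    case False
    obtain s where "s \<le> T" "(f ^^ s) x \<notin> X" using exit x(1) by blast
    then show ?thesis using x False by auto
  qed
qed

lemma binf: "backreach_inf X Z f = R"
  unfolding backreach_inf_def using br_le by blast

lemma R_X: "backreach X Z f t \<subseteq> X" unfolding backreach_def by auto
lemma Z_R: "Z \<subseteq> backreach X Z f t" unfolding backreach_def using ZX by force

lemma closedX: "closed X" using cX compact_imp_closed by blast
lemma closedZ: "closed Z" using cZ compact_imp_closed by blast

lemma closed_br: "closed (backreach X Z f t)"
proof -
  have "backreach X Z f t = (\<Union>t'\<in>{..t}. X \<inter> (f ^^ t') -` Z \<inter> (\<Inter>s\<in>{..t'}. (f ^^ s) -` X))"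
    unfolding backreach_def by auto
  also have "closed \<dots>"
    using closedX closedZ contt
    by (intro closed_UN closed_Int closed_INT) (auto intro: closed_vimage)
  finally show ?thesis .
qed

lemma br_sets[measurable]: "backreach X Z f t \<in> sets borel"
  using closed_br by auto

lemma X_sets[measurable]: "X \<in> sets borel" using closedX by auto
lemma Z_sets[measurable]: "Z \<in> sets borel" using closedZ by auto

lemma pre_R: "x \<in> X \<Longrightarrow> f x \<in> R \<Longrightarrow> x \<in> R"
proof -
  assume x: "x \<in> X" "f x \<in> R"
  then obtain t where t: "t \<le> T" "(f ^^ t) (f x) \<in> Z" "\<forall>s\<le>t. (f ^^ s) (f x) \<in> X"
    unfolding backreach_def by auto
  have "x \<in> backreach X Z f (Suc t)"
    unfolding backreach_def
  proof (intro CollectI conjI exI[of _ "Suc t"])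
    show "(f ^^ Suc t) x \<in> Z" using t by (simp add: funpow_Suc_right del: funpow.simps)
    show "\<forall>s\<le>Suc t. (f ^^ s) x \<in> X"
    proof (intro allI impI)
      fix s assume "s \<le> Suc t"
      then show "(f ^^ s) x \<in> X"
        using t x by (cases s) (auto simp: funpow_Suc_right simp del: funpow.simps)
    qed
  qed (use x in auto)
  then show ?thesis by (rule br_le)
qed

lemma space_eq: "sets M = sets borel \<Longrightarrow> space M = UNIV"
  by (metis sets_eq_imp_space_eq space_borel)

lemma P1:
  assumes F: "primal_feasible X Z f \<mu>0 \<mu>0h \<nu> \<mu>"
  shows "measure \<mu>0 X \<le> measure lborel R"
proof -
  note F = F[unfolded primal_feasible_def meas_on_def]
  have s: "sets \<mu>0 = sets borel" "sets \<mu>0h = sets borel" "sets \<nu> = sets borel" "sets \<mu> = sets borel"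
    using F by auto
  interpret n: finite_measure \<nu> using F by auto
  interpret m0: finite_measure \<mu>0 using F by auto
  have sp: "space \<nu> = UNIV" using space_eq s by auto
  have fm: "f \<in> measurable \<nu> borel" using meas_f measurable_cong_sets[OF s(3) refl] by blast
  have eq: "emeasure \<nu> B + emeasure \<mu> B = emeasure \<nu> (f -` B) + emeasure \<mu>0 B" if "B \<in> sets borel" for B
    using F that fm by (simp add: emeasure_distr sp)
  have nX: "emeasure \<nu> (UNIV - X) = 0" "emeasure \<mu>0 (UNIV - X) = 0" using F by auto
  have "emeasure \<mu> (UNIV - X) \<le> emeasure \<mu> (UNIV - Z)"
    using ZX s by (intro emeasure_mono) auto
  then have "emeasure \<mu> (UNIV - X) = 0" using F by auto
  then have "emeasure \<nu> (f -` (UNIV - X)) = 0"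
    using eq[of "UNIV - X"] nX by simp
  define A where "A = X - R"
  have A[measurable]: "A \<in> sets borel" unfolding A_def by measurable
  have muA: "emeasure \<mu> A = 0"
  proof -
    have "emeasure \<mu> A \<le> emeasure \<mu> (UNIV - Z)"
      using Z_R[of T] s by (intro emeasure_mono) (auto simp: A_def)
    then show ?thesis using F by auto
  qed
  have sub: "A \<subseteq> f -` A \<union> f -` (UNIV - X)"
    using pre_R by (auto simp: A_def)
  have "emeasure \<nu> A \<le> emeasure \<nu> (f -` A \<union> f -` (UNIV - X))"
    using sub s A pre_sets by (intro emeasure_mono) auto
  also have "\<dots> \<le> emeasure \<nu> (f -` A) + emeasure \<nu> (f -` (UNIV - X))"
    using s A pre_sets by (intro emeasure_subadditive) auto
  also have "\<dots> = emeasure \<nu> (f -` A)" using \<open>emeasure \<nu> (f -` (UNIV - X)) = 0\<close> by simp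
  finally have le: "emeasure \<nu> A \<le> emeasure \<nu> (f -` A)" .
  have "emeasure \<nu> (f -` A) + emeasure \<mu>0 A \<le> emeasure \<nu> (f -` A)"
    using eq[OF A] muA le by simp
  then have "emeasure \<nu> (f -` A) + emeasure \<mu>0 A \<le> emeasure \<nu> (f -` A) + 0" by simp
  then have "emeasure \<mu>0 A \<le> 0"
    using ennreal_add_left_cancel_le n.emeasure_finite[of "f -` A"] by (metis infinity_ennreal_def)
  then have m0A: "emeasure \<mu>0 A = 0" by simp
  have "emeasure \<mu>0 X = emeasure \<mu>0 R + emeasure \<mu>0 A"
    using R_X[of T] s by (subst plus_emeasure) (auto simp: A_def Un_absorb1 Diff_partition)
  also have "\<dots> = emeasure \<mu>0 R" using m0A by simp
  also have "\<dots> \<le> emeasure lborel R"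
  proof -
    have "emeasure \<mu>0 R + emeasure \<mu>0h R = emeasure lborel (R \<inter> X)" using F by auto
    also have "R \<inter> X = R" using R_X by blast
    finally show ?thesis by (metis le_iff_add)
  qed
  finally have "emeasure \<mu>0 X \<le> emeasure lborel R" .
  moreover have "emeasure lborel R < \<infinity>"
    using emeasure_compact_finite[of R] closed_br cX R_X compact_Int_closed
    by (metis inf.absorb_iff2)
  ultimately show ?thesis unfolding measure_def
    by (simp add: enn2real_mono)
qed

end

context setting begin

abbreviation "Rb t \<equiv> backreach X Z f t"
definition "Rm t = (if t = 0 then {} else Rb (t - 1))"

lemma Rm_sets[measurable]: "Rm t \<in> sets borel" unfolding Rm_def by auto

lemma Rb_mono: "t \<le> t' \<Longrightarrow> Rb t \<subseteq> Rb t'"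
  unfolding backreach_def using le_trans by blast

lemma R_finite: "emeasure lborel R < \<infinity>"
  using emeasure_compact_finite[of R] closed_br cX R_X compact_Int_closed
  by (metis inf.absorb_iff2)

lemma sub_R_finite: "S \<subseteq> R \<Longrightarrow> emeasure lborel S < \<infinity>"
proof -
  assume "S \<subseteq> R"
  then have "emeasure lborel S \<le> emeasure lborel R" by (intro emeasure_mono) auto
  then show ?thesis using R_finite by (rule le_less_trans)
qed

lemma ed:
  assumes [measurable]: "S \<in> sets borel" "B \<in> sets borel"
  shows "emeasure (distr (density lborel (indicator S)) borel (f ^^ t)) B = emeasure lborel (S \<inter> (f ^^ t) -` B)"
proof -
  have "(f ^^ t) \<in> measurable (density lborel (indicator S)) borel" by simp
  then have "emeasure (distr (density lborel (indicator S)) borel (f ^^ t)) B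
      = emeasure (density lborel (indicator S)) ((f ^^ t) -` B)"
    by (simp add: emeasure_distr)
  also have "\<dots> = emeasure lborel (S \<inter> (f ^^ t) -` B)"
    using pre_sets_t[of B t] by (simp add: emeasure_restricted)
  finally show ?thesis .
qed

lemma in_X: assumes "x \<in> R" "x \<notin> Rb t" shows "(f ^^ t) x \<in> X"
proof -
  obtain t' where t': "t' \<le> T" "(f ^^ t') x \<in> Z" "\<forall>s\<le>t'. (f ^^ s) x \<in> X" "x \<in> X"
    using assms(1) unfolding backreach_def by auto
  have "\<not> t' \<le> t" using assms(2) t' unfolding backreach_def by auto
  then show ?thesis using t' by auto
qed

lemma in_Z: assumes "x \<in> Rb t" "x \<notin> Rm t" shows "(f ^^ t) x \<in> Z"
proof -
  obtain t' where t': "t' \<le> t" "(f ^^ t') x \<in> Z" "\<forall>s\<le>t'. (f ^^ s) x \<in> X" "x \<in> X"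
    using assms(1) unfolding backreach_def by auto
  have "t' = t"
  proof (rule ccontr)
    assume "t' \<noteq> t"
    then have "t' \<le> t - 1" "t \<noteq> 0" using t' by auto
    then have "x \<in> Rm t" using t' unfolding Rm_def backreach_def by auto
    then show False using assms by auto
  qed
  then show ?thesis using t' by simp
qed

definition "nuP = msum borel (Suc T) (\<lambda>t. distr (density lborel (indicator (R - Rb t))) borel (f ^^ t))"
definition "muP = msum borel (Suc T) (\<lambda>t. distr (density lborel (indicator (Rb t - Rm t))) borel (f ^^ t))"
definition "m0P = density lborel (indicator R)"
definition "m0hP = density lborel (indicator (X - R))"

lemma nuP: "B \<in> sets borel \<Longrightarrow> emeasure nuP B = (\<Sum>t<Suc T. emeasure lborel ((R - Rb t) \<inter> (f ^^ t) -` B))"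
  unfolding nuP_def by (subst emeasure_msum) (auto simp: ed)

lemma muP: "B \<in> sets borel \<Longrightarrow> emeasure muP B = (\<Sum>t<Suc T. emeasure lborel ((Rb t - Rm t) \<inter> (f ^^ t) -` B))"
  unfolding muP_def by (subst emeasure_msum) (auto simp: ed)

lemma m0P: "B \<in> sets borel \<Longrightarrow> emeasure m0P B = emeasure lborel (B \<inter> R)"
  unfolding m0P_def by (subst emeasure_restricted) (auto simp: Int_commute)

lemma m0hP: "B \<in> sets borel \<Longrightarrow> emeasure m0hP B = emeasure lborel (B \<inter> (X - R))"
  unfolding m0hP_def by (subst emeasure_restricted) (auto simp: Int_commute)

lemma sum_fin: "(\<And>t. S t \<subseteq> R) \<Longrightarrow> (\<Sum>t<Suc T. emeasure lborel (S t)) \<noteq> \<infinity>"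
  using sub_R_finite by (simp add: sum_Pinfty less_top) 

lemma P2: "primal_feasible X Z f m0P m0hP nuP muP"
  unfolding primal_feasible_def meas_on_def
proof (intro conjI ballI)
  show "sets m0P = sets borel" "sets m0hP = sets borel" "sets nuP = sets borel" "sets muP = sets borel"
    by (auto simp: m0P_def m0hP_def nuP_def muP_def)
  show "finite_measure m0P"
    by (rule finite_measureI) (use R_finite in \<open>auto simp: m0P_def emeasure_restricted\<close>)
  show "finite_measure m0hP"
  proof (rule finite_measureI)
    have "emeasure lborel (X - R) \<le> emeasure lborel X" by (intro emeasure_mono) auto
    then show "emeasure m0hP (space m0hP) \<noteq> \<infinity>"
      using emeasure_compact_finite[OF cX] by (auto simp: m0hP_def emeasure_restricted)
  qed
  have "space nuP = UNIV" "space muP = UNIV"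
    using space_eq[of nuP] space_eq[of muP] by (auto simp: nuP_def muP_def)
  have f1: "emeasure lborel (R - Rb t) \<noteq> \<infinity>" for t using sub_R_finite[of "R - Rb t"] by auto
  have f2: "emeasure lborel (Rb t - Rm t) \<noteq> \<infinity>" if "t < Suc T" for t
  proof -
    have "Rb t - Rm t \<subseteq> R" using Rb_mono[of t T] that by auto
    then show ?thesis using sub_R_finite[of "Rb t - Rm t"] by (simp add: less_top)
  qed
  show "finite_measure nuP" "finite_measure muP"
    using f1 f2 \<open>space nuP = UNIV\<close> \<open>space muP = UNIV\<close> by (auto intro!: finite_measureI simp: nuP muP)
  have "(UNIV - X) \<inter> R = {}" using R_X[of T] by auto
  then show "emeasure m0P (UNIV - X) = 0" by (simp add: m0P)
  have "(UNIV - X) \<inter> (X - R) = {}" by auto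
  then show "emeasure m0hP (UNIV - X) = 0" by (simp add: m0hP)
  have "(R - Rb t) \<inter> (f ^^ t) -` (UNIV - X) = {}" for t using in_X by auto
  then show "emeasure nuP (UNIV - X) = 0"
    by (simp add: nuP del: sum.lessThan_Suc)
  have "(Rb t - Rm t) \<inter> (f ^^ t) -` (UNIV - Z) = {}" for t using in_Z by auto
  then show "emeasure muP (UNIV - Z) = 0"
    by (simp add: muP del: sum.lessThan_Suc)
  fix B :: "(real ^ 'n) set" assume B[measurable]: "B \<in> sets borel"
  show "emeasure m0P B + emeasure m0hP B = emeasure lborel (B \<inter> X)"
  proof -
    have e: "B \<inter> X = (B \<inter> R) \<union> (B \<inter> (X - R))" using R_X[of T] by auto
    have "emeasure lborel (B \<inter> R) + emeasure lborel (B \<inter> (X - R)) = emeasure lborel ((B \<inter> R) \<union> (B \<inter> (X - R)))"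
      by (rule plus_emeasure) auto
    then show ?thesis by (simp add: m0P m0hP e[symmetric])
  qed
  have "sets nuP = sets borel" by (simp add: nuP_def)
  have fm: "f \<in> measurable nuP borel"
    by (subst measurable_cong_sets[OF \<open>sets nuP = sets borel\<close> refl]) (rule meas_f)
  have spn: "space nuP = UNIV" using space_eq[of nuP] by (auto simp: nuP_def)
  have pre: "(f ^^ t) -` (f -` B) = (f ^^ Suc t) -` B" for t by auto
  define a where "a t = emeasure lborel ((R - Rm t) \<inter> (f ^^ t) -` B)" for t
  define b where "b t = emeasure lborel ((R - Rb t) \<inter> (f ^^ Suc t) -` B)" for t
  have split: "emeasure lborel ((R - Rb t) \<inter> (f ^^ t) -` B) + emeasure lborel ((Rb t - Rm t) \<inter> (f ^^ t) -` B) = a t"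
    if "t < Suc T" for t
  proof -
    have "Rm t \<subseteq> Rb t" unfolding Rm_def using Rb_mono[of "t - 1" t] by auto
    moreover have "Rb t \<subseteq> R" using Rb_mono that by simp
    moreover have "(R - Rm t) \<inter> (f ^^ t) -` B = ((R - Rb t) \<inter> (f ^^ t) -` B) \<union> ((Rb t - Rm t) \<inter> (f ^^ t) -` B)"
      using calculation by blast
    ultimately show ?thesis unfolding a_def using pre_sets_t[OF B, of t]
      by (subst plus_emeasure) auto
  qed
  have "emeasure nuP B + emeasure muP B = (\<Sum>t<Suc T. a t)"
    using split by (simp add: nuP muP sum.distrib[symmetric] del: sum.lessThan_Suc)
  also have "\<dots> = a 0 + (\<Sum>t<T. a (Suc t))" by (rule sum.lessThan_Suc_shift)
  also have "a 0 = emeasure m0P B" unfolding a_def by (simp add: m0P Rm_def Int_commute)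
  also have "(\<Sum>t<T. a (Suc t)) = (\<Sum>t<Suc T. b t)"
  proof -
    have "b T = 0" unfolding b_def by simp
    then show ?thesis unfolding a_def b_def by (simp add: Rm_def)
  qed
  also have "(\<Sum>t<Suc T. b t) = emeasure (distr nuP borel f) B"
    using fm pre_sets[OF B] by (simp add: emeasure_distr spn nuP b_def pre del: sum.lessThan_Suc)
  finally show "emeasure nuP B + emeasure muP B = emeasure (distr nuP borel f) B + emeasure m0P B"
    by (simp add: add.commute)
qed

end

context setting begin

lemma contt': "continuous_on UNIV (\<lambda>x. f ((f ^^ t) x))"
  using contt[of "Suc t"] by simp

fun phi :: "nat \<Rightarrow> real ^ 'n \<Rightarrow> real" where
  "phi 0 x = infdist x X"
| "phi (Suc t) x = max (phi t x) (infdist ((f ^^ Suc t) x) X)"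

lemma phi_cont: "continuous_on UNIV (phi t)"
  by (induction t) (auto intro!: continuous_intros contt' continuous_on_infdist)

lemma phi_ge: "s \<le> t \<Longrightarrow> infdist ((f ^^ s) x) X \<le> phi t x"
  by (induction t) (auto simp: le_Suc_eq max.coboundedI1)

lemma phi_eq: "\<exists>s\<le>t. phi t x = infdist ((f ^^ s) x) X"
proof (induction t)
  case (Suc t)
  then obtain s where s: "s \<le> t" "phi t x = infdist ((f ^^ s) x) X" by blast
  show ?case
  proof (cases "phi t x \<ge> infdist ((f ^^ Suc t) x) X")
    case True then show ?thesis using s by (intro exI[of _ s]) (auto simp: max_def)
  next
    case False then show ?thesis by (intro exI[of _ "Suc t"]) (auto simp: max_def)
  qed
qed simp

lemma delta:
  assumes "X \<noteq> {}"
  obtains \<delta> where "\<delta> > 0" "\<forall>x\<in>X. \<exists>s\<le>T. infdist ((f ^^ s) x) X \<ge> \<delta>"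
proof -
  obtain x0 where x0: "x0 \<in> X" "\<forall>y\<in>X. phi T x0 \<le> phi T y"
    using continuous_attains_inf[OF cX assms phi_cont[THEN continuous_on_subset]] by blast
  have pos: "phi T x > 0" if xX: "x \<in> X" for x
  proof -
    obtain s where "s \<le> T" "(f ^^ s) x \<notin> X" using bspec[OF exit xX] by blast
    then have "infdist ((f ^^ s) x) X > 0" using infdist_pos_not_in_closed[OF closedX assms] by blast
    then show ?thesis using phi_ge[OF \<open>s \<le> T\<close>, of x] by linarith
  qed
  show ?thesis
  proof (rule that[of "phi T x0"])
    show "phi T x0 > 0" using pos x0 by blast
    show "\<forall>x\<in>X. \<exists>s\<le>T. phi T x0 \<le> infdist ((f ^^ s) x) X"
      using x0 phi_eq by metis
  qed
qed

definition "hX k y = - min 1 (k * infdist y X)"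
definition "gZ k y = - min 1 (k * infdist y Z)"

fun mX :: "real \<Rightarrow> nat \<Rightarrow> real ^ 'n \<Rightarrow> real" where
  "mX k 0 x = hX k x"
| "mX k (Suc s) x = min (mX k s x) (hX k ((f ^^ Suc s) x))"

definition "u k t x = min (gZ k ((f ^^ t) x)) (mX k t x)"

fun V :: "real \<Rightarrow> nat \<Rightarrow> real ^ 'n \<Rightarrow> real" where
  "V k 0 x = u k 0 x"
| "V k (Suc t) x = max (V k t x) (u k (Suc t) x)"

lemma hX_range: "k \<ge> 0 \<Longrightarrow> -1 \<le> hX k y \<and> hX k y \<le> 0"
  unfolding hX_def by (auto simp: infdist_nonneg)
lemma gZ_range: "k \<ge> 0 \<Longrightarrow> -1 \<le> gZ k y \<and> gZ k y \<le> 0"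
  unfolding gZ_def by (auto simp: infdist_nonneg)
lemma hX_X: "y \<in> X \<Longrightarrow> hX k y = 0" unfolding hX_def by (simp add: infdist_zero)
lemma gZ_Z: "y \<in> Z \<Longrightarrow> gZ k y = 0" unfolding gZ_def by (simp add: infdist_zero)

lemma mX_le: "s \<le> t \<Longrightarrow> mX k t x \<le> hX k ((f ^^ s) x)"
  by (induction t) (auto simp: le_Suc_eq min.coboundedI1)

lemma mX_range: "k \<ge> 0 \<Longrightarrow> -1 \<le> mX k t x \<and> mX k t x \<le> 0"
  by (induction t) (auto simp: hX_range)

lemma mX_zero: "\<forall>s\<le>t. (f ^^ s) x \<in> X \<Longrightarrow> mX k t x = 0"
  by (induction t) (auto simp: hX_X)

lemma mX_shift: "k \<ge> 0 \<Longrightarrow> x \<in> X \<Longrightarrow> mX k (Suc t) x = mX k t (f x)"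
proof (induction t)
  case 0 then show ?case using hX_range[of k "f x"] by (simp add: hX_X)
next
  case (Suc t)
  then show ?case by (simp add: funpow_Suc_right del: funpow.simps)
qed

lemma u_shift: "k \<ge> 0 \<Longrightarrow> x \<in> X \<Longrightarrow> u k (Suc t) x = u k t (f x)"
  unfolding u_def using mX_shift by (simp add: funpow_Suc_right del: funpow.simps)

lemma u_range: "k \<ge> 0 \<Longrightarrow> -1 \<le> u k t x \<and> u k t x \<le> 0"
  unfolding u_def using mX_range[of k t x] gZ_range[of k] by (auto simp: min_def)

lemma V_ge: "s \<le> t \<Longrightarrow> u k s x \<le> V k t x"
  by (induction t) (auto simp: le_Suc_eq max.coboundedI1)

lemma V_le: "(\<forall>s\<le>t. u k s x \<le> c) \<Longrightarrow> V k t x \<le> c"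
  by (induction t) auto

lemma V_range: "k \<ge> 0 \<Longrightarrow> -1 \<le> V k t x \<and> V k t x \<le> 0"
proof -
  assume k: "k \<ge> 0"
  have "u k 0 x \<le> V k t x" by (rule V_ge) simp
  moreover have "V k t x \<le> 0" by (rule V_le) (use u_range[OF k] in blast)
  ultimately show ?thesis using u_range[OF k, of 0 x] by linarith
qed

lemma cont_hX: "continuous_on UNIV (hX k)"
  unfolding hX_def by (intro continuous_intros continuous_on_infdist continuous_on_id)
lemma cont_gZ: "continuous_on UNIV (gZ k)"
  unfolding gZ_def by (intro continuous_intros continuous_on_infdist continuous_on_id)

lemma cont_mX: "continuous_on UNIV (mX k t)"
proof (induction t)
  case 0 then show ?case using cont_hX by (simp add: fun_eq_iff[symmetric])
next
  case (Suc t)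
  have "continuous_on UNIV (\<lambda>x. hX k ((f ^^ Suc t) x))"
    by (rule continuous_on_compose2[OF cont_hX contt]) auto
  then show ?case using Suc by (auto intro!: continuous_intros)
qed

lemma cont_u: "continuous_on UNIV (u k t)"
proof -
  have "continuous_on UNIV (\<lambda>x. gZ k ((f ^^ t) x))"
    by (rule continuous_on_compose2[OF cont_gZ contt]) auto
  then show ?thesis unfolding u_def using cont_mX by (auto intro!: continuous_intros)
qed

lemma cont_V: "continuous_on UNIV (V k t)"
  by (induction t) (auto intro!: continuous_intros cont_u)


lemma feas:
  assumes k: "k > 0" and d: "\<delta> > 0" "k * \<delta> \<ge> 1"
    and dX: "\<forall>x\<in>X. \<exists>s\<le>T. infdist ((f ^^ s) x) X \<ge> \<delta>"
  shows "dual_feasible X Z f (V k T) (\<lambda>x. V k T x + 1)"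
  unfolding dual_feasible_def
proof (intro conjI ballI)
  have k0: "k \<ge> 0" using k by simp
  show "continuous_on X (V k T)" "continuous_on X (\<lambda>x. V k T x + 1)"
    using cont_V by (auto intro!: continuous_intros intro: continuous_on_subset)
  fix x assume x: "x \<in> X"
  show "V k T x + 1 - V k T x - 1 \<ge> 0" by simp
  show "V k T x + 1 \<ge> 0" using V_range[OF k0, of T x] by simp
  show "V k T x - V k T (f x) \<ge> 0"
  proof -
    have "V k T (f x) \<le> V k T x"
    proof (rule V_le, intro allI impI)
      fix s assume s: "s \<le> T"
      have us: "u k s (f x) = u k (Suc s) x" using u_shift[OF k0 x] by simp
      show "u k s (f x) \<le> V k T x"
      proof (cases "s < T")
        case True then show ?thesis using us V_ge[of "Suc s" T k x] by simp
      next
        case False then have sT: "s = T" using s by simp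
        obtain s0 where s0: "s0 \<le> T" "infdist ((f ^^ s0) x) X \<ge> \<delta>" using bspec[OF dX x] by blast
        have "k * infdist ((f ^^ s0) x) X \<ge> k * \<delta>" using s0 k by (intro mult_left_mono) auto
        then have "hX k ((f ^^ s0) x) = -1" unfolding hX_def using d by simp
        moreover have "mX k (Suc T) x \<le> hX k ((f ^^ s0) x)" using s0 by (intro mX_le) simp
        ultimately have "u k (Suc T) x \<le> -1" unfolding u_def by simp
        moreover have "-1 \<le> V k T x" using V_range[OF k0] by blast
        ultimately show ?thesis using us sT by simp
      qed
    qed
    then show ?thesis by simp
  qed
next
  fix x assume x: "x \<in> Z"
  have "u k 0 x \<le> V k T x" by (rule V_ge) simp
  moreover have "u k 0 x = 0" using x ZX unfolding u_def by (auto simp: gZ_Z hX_X)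
  ultimately show "V k T x \<ge> 0" by simp
qed

lemma V_R: "k \<ge> 0 \<Longrightarrow> x \<in> R \<Longrightarrow> V k T x = 0"
proof -
  assume k0: "k \<ge> 0" and "x \<in> R"
  then obtain t where t: "t \<le> T" "(f ^^ t) x \<in> Z" "\<forall>s\<le>t. (f ^^ s) x \<in> X"
    unfolding backreach_def by auto
  have "u k t x = 0" unfolding u_def using t by (simp add: gZ_Z mX_zero)
  then have "0 \<le> V k T x" using V_ge[OF t(1), of k x] by simp
  then show ?thesis using V_range[OF k0, of T x] by simp
qed

lemma u_ev:
  assumes "x \<in> X" "x \<notin> R" "t \<le> T" "Z \<noteq> {}"
  shows "\<exists>K>0. \<forall>k\<ge>K. u k t x \<le> -1"
proof -
  have XZ: "X \<noteq> {}" using assms(4) ZX by auto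
  have "\<not> ((f ^^ t) x \<in> Z \<and> (\<forall>s\<le>t. (f ^^ s) x \<in> X))"
    using assms unfolding backreach_def by auto
  then consider "(f ^^ t) x \<notin> Z" | s where "s \<le> t" "(f ^^ s) x \<notin> X" by blast
  then show ?thesis
  proof cases
    case 1
    then have dpos: "infdist ((f ^^ t) x) Z > 0" using infdist_pos_not_in_closed[OF closedZ assms(4)] by blast
    show ?thesis
    proof (intro exI[of _ "1 / infdist ((f ^^ t) x) Z"] conjI allI impI)
      show "1 / infdist ((f ^^ t) x) Z > 0" using dpos by simp
      fix k assume "1 / infdist ((f ^^ t) x) Z \<le> k"
      then have "1 \<le> k * infdist ((f ^^ t) x) Z" using dpos by (simp add: field_simps)
      then have "gZ k ((f ^^ t) x) = -1" unfolding gZ_def by simp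
      then show "u k t x \<le> -1" unfolding u_def by simp
    qed
  next
    case 2
    then have dpos: "infdist ((f ^^ s) x) X > 0" using infdist_pos_not_in_closed[OF closedX XZ] by blast
    show ?thesis
    proof (intro exI[of _ "1 / infdist ((f ^^ s) x) X"] conjI allI impI)
      show "1 / infdist ((f ^^ s) x) X > 0" using dpos by simp
      fix k assume "1 / infdist ((f ^^ s) x) X \<le> k"
      then have "1 \<le> k * infdist ((f ^^ s) x) X" using dpos by (simp add: field_simps)
      then have "hX k ((f ^^ s) x) = -1" unfolding hX_def by simp
      moreover have "mX k t x \<le> hX k ((f ^^ s) x)" using 2 by (intro mX_le)
      ultimately show "u k t x \<le> -1" unfolding u_def by simp
    qed
  qed
qed

lemma V_ev:
  assumes "x \<in> X" "x \<notin> R" "Z \<noteq> {}"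
  shows "\<exists>K>0. \<forall>k\<ge>K. V k T x = -1"
proof -
  have "\<forall>t\<in>{..T}. \<exists>K>0. \<forall>k\<ge>K. u k t x \<le> -1" using u_ev assms by auto
  then obtain K where K: "\<And>t. t \<le> T \<Longrightarrow> K t > 0 \<and> (\<forall>k\<ge>K t. u k t x \<le> -1)"
    by (metis atMost_iff)
  define K0 where "K0 = Max (K ` {..T})"
  have K0: "K t \<le> K0" if "t \<le> T" for t unfolding K0_def using that by (intro Max_ge) auto
  have "K0 > 0" using K[of 0] K0[of 0] by simp
  moreover have "V k T x = -1" if "k \<ge> K0" for k
  proof -
    have "V k T x \<le> -1" using K K0 that by (intro V_le) force
    moreover have "k \<ge> 0" using that \<open>K0 > 0\<close> by simp
    ultimately show ?thesis using V_range[of k T x] by linarith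
  qed
  ultimately show ?thesis by blast
qed

lemma int_ind_R: "(LINT x:X|lborel. (indicator R x :: real)) = measure lborel R"
proof -
  have "(LINT x:X|lborel. indicator R x) = integral\<^sup>L lborel (indicator R :: _ \<Rightarrow> real)"
    unfolding set_lebesgue_integral_def
    by (rule Bochner_Integration.integral_cong) (use R_X[of T] in \<open>auto simp: indicator_def\<close>)
  also have "\<dots> = measure lborel (R \<inter> space lborel)" by (rule Bochner_Integration.integral_indicator)
  also have "\<dots> = measure lborel R" by simp
  finally show ?thesis .
qed

lemma D2:
  assumes Zne: "Z \<noteq> {}" and e: "\<epsilon> > 0"
  shows "\<exists>v w. dual_feasible X Z f v w \<and> (LINT x:X|lborel. w x) < measure lborel R + \<epsilon>"
proof -
  have Xne: "X \<noteq> {}" using Zne ZX by auto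
  obtain \<delta> where d: "\<delta> > 0" "\<forall>x\<in>X. \<exists>s\<le>T. infdist ((f ^^ s) x) X \<ge> \<delta>"
    using delta[OF Xne] by blast
  define k where "k j = 1 / \<delta> + real j" for j :: nat
  have kpos: "k j > 0" for j using d by (simp add: k_def add_pos_nonneg)
  have kd: "k j * \<delta> \<ge> 1" for j using d by (simp add: k_def field_simps)
  define sj where "sj j x = indicator X x * (V (k j) T x + 1)" for j x
  define g where "g x = indicator X x * (indicator R x :: real)" for x
  have meas: "sj j \<in> borel_measurable lborel" for j
  proof -
    have "V (k j) T \<in> borel_measurable borel" using cont_V by (intro borel_measurable_continuous_onI) auto
    then show ?thesis unfolding sj_def by measurable
  qed
  have lim: "(\<lambda>j. integral\<^sup>L lborel (sj j)) \<longlonglongrightarrow> integral\<^sup>L lborel g"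
  proof (rule integral_dominated_convergence[where w="indicator X"])
    show "g \<in> borel_measurable lborel" unfolding g_def by measurable
    show "sj j \<in> borel_measurable lborel" for j by (rule meas)
    show "integrable lborel (indicator X :: _ \<Rightarrow> real)"
      using emeasure_compact_finite[OF cX] by (intro integrable_real_indicator) (auto simp: less_top)
    show "AE x in lborel. norm (sj j x) \<le> indicator X x" for j
      using V_range[of "k j" T] kpos[of j] unfolding sj_def
      by (intro AE_I2) (auto simp: indicator_def less_imp_le abs_le_iff, smt (verit))
    show "AE x in lborel. (\<lambda>j. sj j x) \<longlonglongrightarrow> g x"
    proof (intro AE_I2)
      fix x
      show "(\<lambda>j. sj j x) \<longlonglongrightarrow> g x"
      proof (cases "x \<in> X")
        case False then show ?thesis by (simp add: sj_def g_def)
      next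
        case xX: True
        show ?thesis
        proof (cases "x \<in> R")
          case True
          then show ?thesis using V_R kpos by (simp add: sj_def g_def xX less_imp_le)
        next
          case False
          obtain K where K: "K > 0" "\<forall>k\<ge>K. V k T x = -1" using V_ev[OF xX False Zne] by blast
          have "eventually (\<lambda>j. sj j x = g x) sequentially"
            unfolding eventually_sequentially
          proof (intro exI[of _ "nat \<lceil>K\<rceil>"] allI impI)
            fix j assume "nat \<lceil>K\<rceil> \<le> j"
            then have "real (nat \<lceil>K\<rceil>) \<le> real j" by simp
            moreover have "K \<le> real (nat \<lceil>K\<rceil>)" by (rule real_nat_ceiling_ge)
            moreover have "0 \<le> 1 / \<delta>" using d by simp
            ultimately have "K \<le> k j" unfolding k_def by linarith
            then show "sj j x = g x" using K False xX by (simp add: sj_def g_def)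
          qed
          then show ?thesis by (rule tendsto_eventually)
        qed
      qed
    qed
  qed
  have "integral\<^sup>L lborel g = measure lborel R"
    using int_ind_R unfolding g_def set_lebesgue_integral_def by simp
  then have "eventually (\<lambda>j. integral\<^sup>L lborel (sj j) < measure lborel R + \<epsilon>) sequentially"
  proof -
    have "integral\<^sup>L lborel g < measure lborel R + \<epsilon>" using e \<open>integral\<^sup>L lborel g = measure lborel R\<close> by simp
    from order_tendstoD(2)[OF lim this] show ?thesis .
  qed
  then obtain j where j: "integral\<^sup>L lborel (sj j) < measure lborel R + \<epsilon>"
    unfolding eventually_sequentially by blast
  show ?thesis
  proof (intro exI conjI)
    show "dual_feasible X Z f (V (k j) T) (\<lambda>x. V (k j) T x + 1)"
      by (rule feas[OF kpos d(1) kd d(2)])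
    show "(LINT x:X|lborel. V (k j) T x + 1) < measure lborel R + \<epsilon>"
      using j unfolding sj_def set_lebesgue_integral_def by simp
  qed
qed


lemma v_nonneg_R:
  assumes F: "dual_feasible X Z f v w"
  shows "x \<in> R \<Longrightarrow> v x \<ge> 0"
proof -
  have *: "(f ^^ t) x \<in> Z \<Longrightarrow> (\<forall>s\<le>t. (f ^^ s) x \<in> X) \<Longrightarrow> v x \<ge> 0" for t x
  proof (induction t arbitrary: x)
    case 0 then show ?case using F unfolding dual_feasible_def by auto
  next
    case (Suc t)
    have "(f ^^ t) (f x) \<in> Z" using Suc.prems(1) by (simp add: funpow_Suc_right del: funpow.simps)
    moreover have "\<forall>s\<le>t. (f ^^ s) (f x) \<in> X"
      using Suc.prems(2) by (auto simp: funpow_Suc_right simp del: funpow.simps)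
    ultimately have "v (f x) \<ge> 0" by (rule Suc.IH)
    moreover have "x \<in> X" using Suc.prems(2)[rule_format, of 0] by simp
    ultimately show ?case using F unfolding dual_feasible_def by force
  qed
  assume "x \<in> R" then show ?thesis unfolding backreach_def using * by blast
qed

lemma D1:
  assumes F: "dual_feasible X Z f v w"
  shows "measure lborel R \<le> (LINT x:X|lborel. w x)"
proof -
  have cw: "continuous_on X w" using F unfolding dual_feasible_def by auto
  have i1: "set_integrable lborel X w"
    using borel_integrable_compact[OF cX cw] by (simp add: set_integrable_def)
  have i2: "set_integrable lborel X (indicator R :: _ \<Rightarrow> real)"
  proof -
    have "integrable lborel (indicator (X \<inter> R) :: _ \<Rightarrow> real)"
      using R_finite R_X[of T] by (intro integrable_real_indicator) (auto simp: Int_absorb1 less_top)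
    then show ?thesis unfolding set_integrable_def
      by (simp add: indicator_inter_arith[symmetric] mult.commute)
  qed
  have "(LINT x:X|lborel. indicator R x) \<le> (LINT x:X|lborel. w x)"
  proof (rule set_integral_mono[OF i2 i1])
    fix x assume "x \<in> X"
    then show "indicator R x \<le> w x"
      using F v_nonneg_R[OF F, of x] unfolding dual_feasible_def indicator_def by force
  qed
  moreover have "(LINT x:X|lborel. indicator R x) = measure lborel R"
  proof -
    have "(LINT x:X|lborel. indicator R x) = integral\<^sup>L lborel (indicator R :: _ \<Rightarrow> real)"
      unfolding set_lebesgue_integral_def
      by (rule Bochner_Integration.integral_cong) (use R_X[of T] in \<open>auto simp: indicator_def\<close>)
    also have "\<dots> = measure lborel (R \<inter> space lborel)" by (rule Bochner_Integration.integral_indicator)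
    also have "\<dots> = measure lborel R" by simp
    finally show ?thesis .
  qed
  ultimately show ?thesis by simp
qed


lemma D2':
  assumes e: "\<epsilon> > 0"
  shows "\<exists>v w. dual_feasible X Z f v w \<and> (LINT x:X|lborel. w x) < measure lborel R + \<epsilon>"
proof (cases "Z = {}")
  case True
  then have "R = {}" unfolding backreach_def by auto
  have "dual_feasible X Z f (\<lambda>x. -1) (\<lambda>x. 0)" using True unfolding dual_feasible_def by auto
  then show ?thesis using e \<open>R = {}\<close> by (intro exI[of _ "\<lambda>x. -1"] exI[of _ "\<lambda>x. 0"]) auto
qed (use D2 e in auto)

lemma primal_val: "primal_value X Z f = measure lborel R"
  unfolding primal_value_def
proof (rule cSup_eq_maximum)
  have "emeasure m0P X = emeasure lborel R" using R_X[of T] by (simp add: m0P Int_absorb1)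
  then have "measure m0P X = measure lborel R" by (simp add: measure_def)
  then show "measure lborel R \<in> {measure \<mu>0 X |\<mu>0 \<mu>0h \<nu> \<mu>. primal_feasible X Z f \<mu>0 \<mu>0h \<nu> \<mu>}"
    using P2 by force
qed (use P1 in auto)

lemma dual_val: "dual_value X Z f = measure lborel R"
  unfolding dual_value_def
proof (rule antisym)
  let ?S = "{(LINT x:X|lborel. w x) | v w. dual_feasible X Z f v w}"
  have ne: "?S \<noteq> {}" using D2'[of 1] by auto
  have bdd: "bdd_below ?S" using D1 by (auto intro!: bdd_belowI[of _ "measure lborel R"])
  show "measure lborel R \<le> Inf ?S" using ne D1 by (intro cInf_greatest) auto
  show "Inf ?S \<le> measure lborel R"
  proof (rule field_le_epsilon)
    fix e :: real assume "e > 0"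
    then obtain v w where "dual_feasible X Z f v w" "(LINT x:X|lborel. w x) < measure lborel R + e"
      using D2' by blast
    then have "Inf ?S \<le> (LINT x:X|lborel. w x)" using bdd by (intro cInf_lower) auto
    then show "Inf ?S \<le> measure lborel R + e" using \<open>(LINT x:X|lborel. w x) < _\<close> by simp
  qed
qed
end

lemma tail_bound:
  fixes a b :: "nat \<Rightarrow> real"
  assumes sa: "summable a" and sb: "summable b" and eq: "\<forall>i<m. a i = b i"
    and bd: "\<forall>i. \<bar>a i - b i\<bar> \<le> C * q^i" and q: "0 \<le> q" "q < 1" and C: "0 \<le> C"
  shows "\<bar>suminf a - suminf b\<bar> \<le> C * q^m / (1 - q)"
proof -
  define e where "e i = a i - b i" for i
  have se: "summable e" unfolding e_def using sa sb by (rule summable_diff)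
  have "suminf e = suminf a - suminf b" unfolding e_def using sa sb by (rule suminf_diff[symmetric])
  moreover have "suminf e = (\<Sum>n. e (n + m)) + (\<Sum>i<m. e i)" by (rule suminf_split_initial_segment[OF se])
  moreover have "(\<Sum>i<m. e i) = 0" using eq by (simp add: e_def)
  ultimately have eqs: "suminf a - suminf b = (\<Sum>n. e (n + m))" by simp
  have sg: "summable (\<lambda>n. C * q^m * q^n)" using q by (intro summable_mult summable_geometric) auto
  have b2: "norm (norm (e (n + m))) \<le> C * q^m * q^n" for n
    using bd[rule_format, of "n + m"] by (simp add: e_def power_add mult_ac)
  have sn: "summable (\<lambda>n. norm (e (n + m)))"
    by (rule summable_comparison_test'[OF sg]) (use b2 in auto)
  have "\<bar>\<Sum>n. e (n + m)\<bar> \<le> (\<Sum>n. norm (e (n + m)))" using summable_norm[OF sn] by simp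
  also have "\<dots> \<le> (\<Sum>n. C * q^m * q^n)"
    by (rule suminf_le[OF _ sn sg]) (use b2 in auto)
  also have "\<dots> = C * q^m * (1 / (1 - q))"
    using q by (subst suminf_mult) (auto simp: suminf_geometric)
  finally show ?thesis using eqs by simp
qed

definition cc :: "(nat \<Rightarrow> bool) \<Rightarrow> real" where
  "cc d = (\<Sum>k. (if d k then 2 else 0) / 3 ^ Suc k)"

lemma cc_summable: "summable (\<lambda>k. (if d k then 2 else 0) / (3::real) ^ Suc k)"
proof (rule summable_comparison_test'[of "\<lambda>k. (2/3) * (1/3)^k"])
  show "summable (\<lambda>k. (2/3) * (1/3::real)^k)" by (intro summable_mult summable_geometric) auto
  show "norm ((if d k then 2 else 0) / (3::real) ^ Suc k) \<le> (2/3) * (1/3)^k" for k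
    by (auto simp: power_divide field_simps)
qed

lemma cc_range: "0 \<le> cc d \<and> cc d \<le> 1"
proof
  show "0 \<le> cc d" unfolding cc_def by (intro suminf_nonneg cc_summable) auto
  have S: "summable (\<lambda>k. (2/3) * (1/3::real)^k)" by (intro summable_mult summable_geometric) auto
  have "cc d \<le> (\<Sum>k. (2/3) * (1/3::real)^k)"
    unfolding cc_def
    by (rule suminf_le[OF _ cc_summable S]) (auto simp: power_divide field_simps)
  also have "\<dots> = 1" by (subst suminf_mult) (auto simp: suminf_geometric)
  finally show "cc d \<le> 1" .
qed

lemma cc_sep:
  assumes "\<forall>i<k. d i = d' i" "d k \<noteq> d' k"
  shows "\<bar>cc d - cc d'\<bar> \<ge> 1 / 3 ^ Suc k"
proof -
  define a where "a i = (if d i then 2 else 0) / (3::real) ^ Suc i" for i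
  define b where "b i = (if d' i then 2 else 0) / (3::real) ^ Suc i" for i
  have sa: "summable a" "summable b" unfolding a_def b_def by (rule cc_summable)+
  have sa1: "summable (\<lambda>n. a (n + k))" "summable (\<lambda>n. b (n + k))"
    using sa by (auto simp: summable_iff_shift)
  have "cc d - cc d' = suminf a - suminf b" unfolding cc_def a_def b_def ..
  also have "\<dots> = (\<Sum>n. a (n + k)) - (\<Sum>n. b (n + k))"
    using suminf_split_initial_segment[OF sa(1), of k] suminf_split_initial_segment[OF sa(2), of k]
      assms(1) by (simp add: a_def b_def)
  finally have 1: "cc d - cc d' = (\<Sum>n. a (n + k)) - (\<Sum>n. b (n + k))" .
  have 2: "(\<Sum>n. a (n + k)) = a k + (\<Sum>n. a (n + Suc k))"
    using suminf_split_head[OF sa1(1)] by (simp add: add.commute)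
  have 3: "(\<Sum>n. b (n + k)) = b k + (\<Sum>n. b (n + Suc k))"
    using suminf_split_head[OF sa1(2)] by (simp add: add.commute)
  have t: "\<bar>(\<Sum>n. a (n + Suc k)) - (\<Sum>n. b (n + Suc k))\<bar> \<le> (2 / 3 ^ Suc (Suc k)) * (1/3)^0 / (1 - 1/3)"
  proof (rule tail_bound)
    show "summable (\<lambda>n. a (n + Suc k))" "summable (\<lambda>n. b (n + Suc k))"
      using sa summable_iff_shift[of a "Suc k"] summable_iff_shift[of b "Suc k"] by simp_all
    show "\<forall>i. \<bar>a (i + Suc k) - b (i + Suc k)\<bar> \<le> 2 / 3 ^ Suc (Suc k) * (1 / 3) ^ i"
      by (auto simp: a_def b_def power_add power_divide field_simps)
  qed auto
  have "\<bar>a k - b k\<bar> = 2 / 3 ^ Suc k" using assms(2) by (cases "d k") (auto simp: a_def b_def)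
  moreover have "(2 / 3 ^ Suc (Suc k)) * (1/3::real)^0 / (1 - 1/3) = 1 / 3 ^ Suc k"
    by (simp add: field_simps)
  moreover have "cc d - cc d' = (a k - b k) + ((\<Sum>n. a (n + Suc k)) - (\<Sum>n. b (n + Suc k)))"
    using 1 2 3 by simp
  moreover have "2 / 3 ^ Suc k = 2 * (1 / (3::real) ^ Suc k)" by simp
  ultimately show ?thesis using t abs_triangle_ineq[of "cc d - cc d'" "- ((\<Sum>n. a (n + Suc k)) - (\<Sum>n. b (n + Suc k)))"]
    by linarith
qed


definition bitr :: "nat \<Rightarrow> real \<Rightarrow> bool" where "bitr i r = odd \<lfloor>2 ^ Suc i * r\<rfloor>"

lemma floor2: "\<lfloor>2 * x\<rfloor> = 2 * \<lfloor>x\<rfloor> + (if odd \<lfloor>2 * x\<rfloor> then 1 else 0)" for x :: real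
proof -
  have a: "2 * \<lfloor>x\<rfloor> \<le> \<lfloor>2 * x\<rfloor>" by linarith
  have b: "\<lfloor>2 * x\<rfloor> \<le> 2 * \<lfloor>x\<rfloor> + 1" by linarith
  show ?thesis using a b by presburger
qed

lemma bit_partial:
  assumes "0 \<le> r" "r < 1"
  shows "(\<Sum>i<m. (if bitr i r then 1 else 0) / (2::real) ^ Suc i) = \<lfloor>2 ^ m * r\<rfloor> / 2 ^ m"
proof (induction m)
  case 0 then show ?case using assms by (simp add: floor_eq_iff)
next
  case (Suc m)
  have f: "\<lfloor>2 ^ Suc m * r\<rfloor> = 2 * \<lfloor>2 ^ m * r\<rfloor> + (if bitr m r then 1 else 0)"
    using floor2[of "2 ^ m * r"] unfolding bitr_def by (simp add: mult.assoc)
  have f': "real_of_int \<lfloor>2 ^ Suc m * r\<rfloor> = 2 * real_of_int \<lfloor>2 ^ m * r\<rfloor> + (if bitr m r then 1 else 0)"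
    using f by simp
  have "(\<Sum>i<Suc m. (if bitr i r then 1 else 0) / (2::real) ^ Suc i)
      = \<lfloor>2 ^ m * r\<rfloor> / 2 ^ m + (if bitr m r then 1 else 0) / 2 ^ Suc m" using Suc by simp
  also have "\<dots> = (2 * real_of_int \<lfloor>2 ^ m * r\<rfloor> + (if bitr m r then 1 else 0)) / 2 ^ Suc m"
    by (simp add: field_simps)
  also have "\<dots> = \<lfloor>2 ^ Suc m * r\<rfloor> / 2 ^ Suc m" by (simp only: f'[symmetric])
  finally show ?case .
qed

lemma bit_sums:
  assumes "0 \<le> r" "r < 1"
  shows "(\<lambda>i. (if bitr i r then 1 else 0) / (2::real) ^ Suc i) sums r"
  unfolding sums_def
proof -
  have "(\<lambda>n. \<lfloor>2 ^ n * r\<rfloor> / (2::real) ^ n) \<longlonglongrightarrow> r"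
  proof (rule tendsto_sandwich[of "\<lambda>n. r - (1/2)^n" _ _ "\<lambda>n. r"])
    show "\<forall>\<^sub>F n in sequentially. r - (1 / 2) ^ n \<le> \<lfloor>2 ^ n * r\<rfloor> / (2::real) ^ n"
    proof (intro always_eventually allI)
      fix n :: nat
      have "2 ^ n * r - 1 \<le> \<lfloor>2 ^ n * r\<rfloor>" by linarith
      then have "(2 ^ n * r - 1) / 2 ^ n \<le> \<lfloor>2 ^ n * r\<rfloor> / (2::real) ^ n"
        by (intro divide_right_mono) auto
      moreover have "(2 ^ n * r - 1) / 2 ^ n = r - (1 / 2::real) ^ n"
        by (simp add: field_simps power_divide)
      ultimately show "r - (1 / 2) ^ n \<le> \<lfloor>2 ^ n * r\<rfloor> / (2::real) ^ n" by simp
    qed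
    show "\<forall>\<^sub>F n in sequentially. \<lfloor>2 ^ n * r\<rfloor> / (2::real) ^ n \<le> r"
      by (intro always_eventually allI) (simp add: field_simps)
    have "(\<lambda>n. (1/2::real)^n) \<longlonglongrightarrow> 0" by (rule LIMSEQ_realpow_zero) auto
    then show "(\<lambda>n. r - (1 / 2) ^ n) \<longlonglongrightarrow> r" using tendsto_diff[of "\<lambda>n. r" r] by force
  qed simp
  then show "(\<lambda>n. \<Sum>i<n. (if bitr i r then 1 else 0) / (2::real) ^ Suc i) \<longlonglongrightarrow> r"
    using bit_partial[OF assms] by simp
qed

definition Gam :: "('n::finite \<Rightarrow> nat) \<Rightarrow> (nat \<Rightarrow> bool) \<Rightarrow> real ^ 'n" where
  "Gam idx d = (\<chi> j. \<Sum>i. (if d (i * CARD('n) + idx j) then 1 else 0) / 2 ^ Suc i)"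

definition encpt :: "('n::finite \<Rightarrow> nat) \<Rightarrow> real ^ 'n \<Rightarrow> nat \<Rightarrow> bool" where
  "encpt idx p k = bitr (k div CARD('n)) (p $ (inv_into UNIV idx (k mod CARD('n))))"

lemma Gam_code:
  fixes idx :: "'n::finite \<Rightarrow> nat"
  assumes bij: "bij_betw idx UNIV {..<CARD('n)}" and p: "\<forall>j. 0 \<le> p $ j \<and> p $ j < 1"
  shows "Gam idx (encpt idx p) = p"
proof -
  have "encpt idx p (i * CARD('n) + idx j) = bitr i (p $ j)" for i j
  proof -
    have lt: "idx j < CARD('n)" using bij by (auto simp: bij_betw_def)
    then have "(i * CARD('n) + idx j) div CARD('n) = i" "(i * CARD('n) + idx j) mod CARD('n) = idx j"
      by auto
    moreover have "inv_into UNIV idx (idx j) = j" using bij by (auto simp: bij_betw_def)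
    ultimately show ?thesis unfolding encpt_def by simp
  qed
  then show ?thesis unfolding Gam_def using bit_sums p by (auto simp: vec_eq_iff sums_iff)
qed

lemma Gam_summable: "summable (\<lambda>i. (if d i then 1 else 0) / (2::real) ^ Suc i)"
proof (rule summable_comparison_test'[of "\<lambda>k. (1/2) * (1/2)^k"])
  show "summable (\<lambda>k. (1/2) * (1/2::real)^k)" by (intro summable_mult summable_geometric) auto
  show "norm ((if d k then 1 else 0) / (2::real) ^ Suc k) \<le> (1/2) * (1/2)^k" for k
    by (auto simp: power_divide field_simps)
qed

lemma Gam_close:
  fixes idx :: "'n::finite \<Rightarrow> nat"
  assumes bij: "bij_betw idx UNIV {..<CARD('n)}" and eq: "\<forall>k < m * CARD('n). d k = d' k"
  shows "norm (Gam idx d - Gam idx d') \<le> CARD('n) / 2 ^ m"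
proof -
  have c: "\<bar>Gam idx d $ j - Gam idx d' $ j\<bar> \<le> 1 / 2 ^ m" for j
  proof -
    have lt: "idx j < CARD('n)" using bij by (auto simp: bij_betw_def)
    have "\<bar>Gam idx d $ j - Gam idx d' $ j\<bar> \<le> (1/2) * (1/2)^m / (1 - 1/2)"
      unfolding Gam_def vec_lambda_beta
    proof (rule tail_bound)
      show "summable (\<lambda>i. (if d (i * CARD('n) + idx j) then 1 else 0) / (2::real) ^ Suc i)"
        "summable (\<lambda>i. (if d' (i * CARD('n) + idx j) then 1 else 0) / (2::real) ^ Suc i)"
        by (rule Gam_summable)+
      show "\<forall>i<m. (if d (i * CARD('n) + idx j) then 1 else 0) / (2::real) ^ Suc i =
                (if d' (i * CARD('n) + idx j) then 1 else 0) / 2 ^ Suc i"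
      proof (intro allI impI)
        fix i assume "i < m"
        have "i * CARD('n) + idx j < Suc i * CARD('n)" using lt by simp
        also have "\<dots> \<le> m * CARD('n)" using \<open>i < m\<close> by (intro mult_le_mono1) simp
        finally have "i * CARD('n) + idx j < m * CARD('n)" .
        then show "(if d (i * CARD('n) + idx j) then 1 else 0) / (2::real) ^ Suc i =
                (if d' (i * CARD('n) + idx j) then 1 else 0) / 2 ^ Suc i" using eq by simp
      qed
      show "\<forall>i. \<bar>(if d (i * CARD('n) + idx j) then 1 else 0) / 2 ^ Suc i -
             (if d' (i * CARD('n) + idx j) then 1 else 0) / 2 ^ Suc i\<bar> \<le> 1 / 2 * (1 / (2::real)) ^ i"
        by (auto simp: power_divide field_simps)
    qed auto
    also have "\<dots> = 1 / 2 ^ m" by (simp add: power_divide)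
    finally show ?thesis .
  qed
  have "norm (Gam idx d - Gam idx d') \<le> (\<Sum>j\<in>UNIV. \<bar>(Gam idx d - Gam idx d') $ j\<bar>)"
    by (rule norm_le_l1_cart)
  also have "\<dots> \<le> (\<Sum>j\<in>(UNIV::'n set). 1 / 2 ^ m)" using c by (intro sum_mono) simp
  also have "\<dots> = CARD('n) / 2 ^ m" by simp
  finally show ?thesis .
qed


lemma cc_inj: "inj cc"
proof (rule injI, rule ccontr)
  fix a b assume eq: "cc a = cc b" and ne: "a \<noteq> b"
  then obtain k where "a k \<noteq> b k" by auto
  define k0 where "k0 = (LEAST k. a k \<noteq> b k)"
  have k0: "a k0 \<noteq> b k0" unfolding k0_def by (rule LeastI) fact
  have "\<forall>i<k0. a i = b i" unfolding k0_def using not_less_Least by blast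
  then have "\<bar>cc a - cc b\<bar> \<ge> 1 / 3 ^ Suc k0" using k0 by (rule cc_sep)
  moreover have "(0::real) < 1 / 3 ^ Suc k0" by simp
  ultimately show False using eq by linarith
qed

lemma cc_agree:
  assumes "\<bar>cc a - cc b\<bar> < 1 / 3 ^ M"
  shows "\<forall>k<M. a k = b k"
proof (rule ccontr)
  assume "\<not> (\<forall>k<M. a k = b k)"
  then obtain k where k: "k < M" "a k \<noteq> b k" by auto
  define k0 where "k0 = (LEAST k. a k \<noteq> b k)"
  have k0: "a k0 \<noteq> b k0" unfolding k0_def by (rule LeastI) (fact k(2))
  have "k0 \<le> k" unfolding k0_def by (rule Least_le) (fact k(2))
  have "\<forall>i<k0. a i = b i" unfolding k0_def using not_less_Least by blast
  then have "\<bar>cc a - cc b\<bar> \<ge> 1 / 3 ^ Suc k0" using k0 by (rule cc_sep)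
  moreover have "(1::real) / 3 ^ M \<le> 1 / 3 ^ Suc k0"
    using \<open>k0 \<le> k\<close> k(1) by (intro divide_left_mono power_increasing) auto
  ultimately show False using assms by simp
qed

lemma coding:
  fixes K :: "(real ^ 'n) set"
  assumes "bounded K"
  shows "\<exists>(\<Phi> :: real \<Rightarrow> real ^ 'n) (\<sigma> :: real ^ 'n \<Rightarrow> real). continuous_on UNIV \<Phi> \<and>
           (\<forall>x\<in>K. \<Phi> (\<sigma> x) = x \<and> 0 \<le> \<sigma> x \<and> \<sigma> x \<le> 1)"
proof -
  obtain B where B: "B > 0" "\<forall>x\<in>K. norm x \<le> B" using assms bounded_pos by blast
  define aff :: "real ^ 'n \<Rightarrow> real ^ 'n" where "aff x = (\<chi> j. (x $ j + B) / (4 * B))" for x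
  define psi :: "real ^ 'n \<Rightarrow> real ^ 'n" where "psi p = (\<chi> j. 4 * B * p $ j - B)" for p
  have psi_aff: "psi (aff x) = x" for x using B by (simp add: psi_def aff_def vec_eq_iff)
  have cpsi: "continuous_on UNIV psi" unfolding psi_def
    by (intro continuous_on_vec_lambda continuous_intros continuous_on_component continuous_on_id)
  have aff_rng: "\<forall>j. 0 \<le> aff x $ j \<and> aff x $ j < 1" if "x \<in> K" for x
  proof
    fix j
    have "\<bar>x $ j\<bar> \<le> B" using B(2) that component_le_norm_cart[of x j] by force
    then show "0 \<le> aff x $ j \<and> aff x $ j < 1" using B(1) by (auto simp: aff_def field_simps)
  qed
  obtain idx0 :: "'n \<Rightarrow> nat" where "bij_betw idx0 UNIV {0..<card (UNIV :: 'n set)}"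
    using ex_bij_betw_finite_nat[of "UNIV :: 'n set"] by auto
  then have bij: "bij_betw idx0 UNIV {..<CARD('n)}" by (simp add: atLeast0LessThan)
  define \<gamma> where "\<gamma> r = Gam idx0 (inv_into UNIV cc r)" for r
  have gcc: "\<gamma> (cc d) = Gam idx0 d" for d unfolding \<gamma>_def using cc_inj by simp
  have uc: "uniformly_continuous_on (range cc) \<gamma>"
    unfolding uniformly_continuous_on_def
  proof (intro allI impI)
    fix e :: real assume e: "e > 0"
    obtain m where m: "CARD('n) / e < 2 ^ m" using real_arch_pow[of 2 "CARD('n) / e"] by auto
    have me: "CARD('n) / 2 ^ m < e" using m e by (simp add: field_simps)
    show "\<exists>d>0. \<forall>x\<in>range cc. \<forall>x'\<in>range cc. dist x' x < d \<longrightarrow> dist (\<gamma> x') (\<gamma> x) < e"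
    proof (intro exI[of _ "1 / 3 ^ (m * CARD('n))"] conjI ballI impI)
      show "(0::real) < 1 / 3 ^ (m * CARD('n))" by simp
      fix x x' assume x: "x \<in> range cc" and x': "x' \<in> range cc" and d: "dist x' x < 1 / 3 ^ (m * CARD('n))"
      obtain a b where ab: "x' = cc a" "x = cc b" using x x' by auto
      have "\<forall>k<m * CARD('n). a k = b k" using d ab by (intro cc_agree) (simp add: dist_real_def)
      then have "norm (Gam idx0 a - Gam idx0 b) \<le> CARD('n) / 2 ^ m" by (rule Gam_close[OF bij])
      then show "dist (\<gamma> x') (\<gamma> x) < e" using me ab gcc by (simp add: dist_norm)
    qed
  qed
  obtain g1 where g1: "uniformly_continuous_on (closure (range cc)) g1" "\<And>x. x \<in> range cc \<Longrightarrow> \<gamma> x = g1 x"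
    using uniformly_continuous_on_extension_on_closure[OF uc] by metis
  obtain g2 where g2: "continuous_on UNIV g2" "\<And>x. x \<in> closure (range cc) \<Longrightarrow> g2 x = g1 x"
    using Tietze_unbounded[OF uniformly_continuous_imp_continuous[OF g1(1)], of UNIV]
    by (metis closed_closure closedin_closed_Int inf_top.left_neutral)
  define \<Phi> where "\<Phi> r = psi (g2 r)" for r
  define \<sigma> where "\<sigma> x = cc (encpt idx0 (aff x))" for x
  show ?thesis
  proof (intro exI conjI ballI)
    show "continuous_on UNIV \<Phi>" unfolding \<Phi>_def
      using continuous_on_compose[OF g2(1), of psi] cpsi continuous_on_subset[OF cpsi] by (simp add: o_def)
    fix x assume x: "x \<in> K"
    have "g2 (\<sigma> x) = \<gamma> (\<sigma> x)" unfolding \<sigma>_def using g1(2) g2(2) closure_subset by (metis rangeI subsetD)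
    also have "\<dots> = aff x" unfolding \<sigma>_def gcc using Gam_code[OF bij aff_rng[OF x]] .
    finally show "\<Phi> (\<sigma> x) = x" by (simp add: \<Phi>_def psi_aff)
    show "0 \<le> \<sigma> x" "\<sigma> x \<le> 1" unfolding \<sigma>_def using cc_range by auto
  qed
qed


lemma closed_approx:
  fixes N :: "(real ^ 'n) measure" and F :: "(real ^ 'n) set" and \<phi> :: "real ^ 'n \<Rightarrow> real ^ 'n"
  assumes fin: "finite_measure N" and sN: "sets N = sets borel" and F: "closed F" "F \<noteq> {}"
    and c: "continuous_on UNIV \<phi>"
  shows "(\<lambda>k. \<integral>x. max 0 (1 - real k * infdist (\<phi> x) F) \<partial>N) \<longlonglongrightarrow> measure N (\<phi> -` F)"
proof -
  interpret N: finite_measure N by fact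
  have mc: "measurable N borel = measurable borel borel" by (rule measurable_cong_sets[OF sN refl])
  have spN: "space N = UNIV" using sN by (metis sets_eq_imp_space_eq space_borel)
  have mphi: "\<phi> \<in> borel_measurable borel" using c by (intro borel_measurable_continuous_onI) auto
  have pre: "\<phi> -` F \<in> sets borel" using measurable_sets[OF mphi, of F] F(1) by simp
  have "(\<lambda>k. integral\<^sup>L N (\<lambda>x. max 0 (1 - real k * infdist (\<phi> x) F))) \<longlonglongrightarrow> integral\<^sup>L N (indicator (\<phi> -` F))"
  proof (rule integral_dominated_convergence[where w="\<lambda>_. 1"])
    show "indicator (\<phi> -` F) \<in> borel_measurable N" using pre sN by (simp add: borel_measurable_indicator)
    show "(\<lambda>x. max 0 (1 - real k * infdist (\<phi> x) F)) \<in> borel_measurable N" for k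
    proof -
      have "continuous_on UNIV (\<lambda>x. max 0 (1 - real k * infdist (\<phi> x) F))"
        by (intro continuous_intros continuous_on_infdist c)
      then show ?thesis unfolding mc by (intro borel_measurable_continuous_onI) auto
    qed
    show "integrable N (\<lambda>_. 1::real)" by simp
    show "AE x in N. norm (max 0 (1 - real k * infdist (\<phi> x) F)) \<le> 1" for k
      by (intro AE_I2) (auto simp: infdist_nonneg)
    show "AE x in N. (\<lambda>k. max 0 (1 - real k * infdist (\<phi> x) F)) \<longlonglongrightarrow> indicator (\<phi> -` F) x"
    proof (intro AE_I2)
      fix x
      show "(\<lambda>k. max 0 (1 - real k * infdist (\<phi> x) F)) \<longlonglongrightarrow> indicator (\<phi> -` F) x"
      proof (cases "\<phi> x \<in> F")
        case True then show ?thesis by (simp add: infdist_zero)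
      next
        case False
        then have d: "infdist (\<phi> x) F > 0" using infdist_pos_not_in_closed F by blast
        have "eventually (\<lambda>k. max 0 (1 - real k * infdist (\<phi> x) F) = indicator (\<phi> -` F) x) sequentially"
          unfolding eventually_sequentially
        proof (intro exI[of _ "nat \<lceil>1 / infdist (\<phi> x) F\<rceil>"] allI impI)
          fix k assume "nat \<lceil>1 / infdist (\<phi> x) F\<rceil> \<le> k"
          then have "1 / infdist (\<phi> x) F \<le> real k"
            by (meson le_trans nat_ceiling_le_eq of_nat_le_iff real_nat_ceiling_ge)
          then have "1 \<le> real k * infdist (\<phi> x) F" using d by (simp add: field_simps)
          then show "max 0 (1 - real k * infdist (\<phi> x) F) = indicator (\<phi> -` F) x" using False by simp
        qed
        then show ?thesis by (rule tendsto_eventually)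
      qed
    qed
  qed
  also have "integral\<^sup>L N (indicator (\<phi> -` F)) = measure N (\<phi> -` F)"
    using spN by (simp add: Bochner_Integration.integral_indicator)
  finally show ?thesis .
qed


lemma KB:
  fixes f :: "real ^ 'n \<Rightarrow> real ^ 'n" and K :: "(real ^ 'n) set"
  assumes cont: "continuous_on UNIV f" and cK: "compact K" and Kne: "K \<noteq> {}" and fK: "f ` K \<subseteq> K"
  shows "\<exists>\<nu>. sets \<nu> = sets borel \<and> finite_measure \<nu> \<and> emeasure \<nu> (UNIV - K) = 0 \<and>
           emeasure \<nu> UNIV = 1 \<and> distr \<nu> borel f = \<nu>"
proof -
  obtain x0 where x0: "x0 \<in> K" using Kne by blast
  define y where "y t = (f ^^ t) x0" for t
  have yK: "y t \<in> K" for t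
    by (induction t) (use x0 fK in \<open>auto simp: y_def\<close>)
  have ySuc: "y (Suc t) = f (y t)" for t by (simp add: y_def)
  obtain \<Phi> :: "real \<Rightarrow> real ^ 'n" and \<sigma> where cPhi: "continuous_on UNIV \<Phi>"
    and Phi: "\<forall>x\<in>K. \<Phi> (\<sigma> x) = x \<and> 0 \<le> \<sigma> x \<and> \<sigma> x \<le> 1"
    using coding[OF compact_imp_bounded[OF cK]] by blast
  define s where "s t = \<sigma> (y t)" for t
  have Ps: "\<Phi> (s t) = y t" "0 \<le> s t" "s t \<le> 1" for t using Phi yK by (auto simp: s_def)
  define \<mu> where "\<mu> N = distr (measure_pmf (pmf_of_set {..N})) borel s" for N :: nat
  have rd: "real_distribution (\<mu> N)" for N
  proof -
    have "prob_space (\<mu> N)" unfolding \<mu>_def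
      by (rule prob_space.prob_space_distr) (auto simp: measure_pmf.prob_space_axioms)
    then show ?thesis unfolding real_distribution_def real_distribution_axioms_def by (simp add: \<mu>_def)
  qed
  have intmu: "integral\<^sup>L (\<mu> N) h = (\<Sum>t\<le>N. h (s t)) / Suc N" if "h \<in> borel_measurable borel" for h N
  proof -
    have "integral\<^sup>L (\<mu> N) h = integral\<^sup>L (measure_pmf (pmf_of_set {..N})) (\<lambda>t. h (s t))"
      unfolding \<mu>_def using that by (intro integral_distr) auto
    also have "\<dots> = (\<Sum>t\<le>N. h (s t)) / card {..N}" by (rule integral_pmf_of_set) auto
    finally show ?thesis by simp
  qed
  have tight: "tight \<mu>"
    unfolding tight_def
  proof (intro conjI allI impI)
    show "real_distribution (\<mu> n)" for n by (rule rd)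
    fix e :: real assume "e > 0"
    have m1: "measure (\<mu> n) {-1<..1} = 1" for n
    proof -
      have "measure (\<mu> n) {-1<..1} = measure (measure_pmf (pmf_of_set {..n})) (s -` {-1<..1})"
        unfolding \<mu>_def by (subst measure_distr) auto
      also have "s -` {-1<..1} = UNIV"
      proof -
        have "-1 < s t \<and> s t \<le> 1" for t using Ps(2)[of t] Ps(3)[of t] by linarith
        then show ?thesis by auto
      qed
      finally show ?thesis by simp
    qed
    show "\<exists>a b. a < b \<and> (\<forall>n. 1 - e < measure (\<mu> n) {a<..b})"
      using \<open>e > 0\<close> m1 by (intro exI[of _ "-1"] exI[of _ "1"]) auto
  qed
  obtain r M where rM: "strict_mono (r :: nat \<Rightarrow> nat)" "real_distribution M" "weak_conv_m (\<mu> \<circ> id \<circ> r) M"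
    using tight_imp_convergent_subsubsequence[OF tight, of id] by (auto simp: strict_mono_def)
  interpret M: real_distribution M by fact
  define A where "A N g = (\<Sum>t\<le>N. g (y t)) / Suc N" for N and g :: "real ^ 'n \<Rightarrow> real"
  define \<nu> where "\<nu> = distr M borel \<Phi>"
  have mPhi: "\<Phi> \<in> borel_measurable borel" using cPhi by (intro borel_measurable_continuous_onI) auto
  have snu: "sets \<nu> = sets borel" by (simp add: \<nu>_def)
  have spnu: "space \<nu> = UNIV" by (simp add: \<nu>_def)
  have pnu: "prob_space \<nu>" unfolding \<nu>_def
    by (rule M.prob_space_distr) (use mPhi in simp)
  interpret nu: prob_space \<nu> by fact
  have lim: "(\<lambda>j. A (r j) g) \<longlonglongrightarrow> integral\<^sup>L \<nu> g"
    if cg: "continuous_on UNIV g" and bg: "\<And>x. \<bar>g x\<bar> \<le> Bg" for g :: "real ^ 'n \<Rightarrow> real" and Bg :: real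
  proof -
    have mg: "g \<in> borel_measurable borel" using cg by (intro borel_measurable_continuous_onI) auto
    have cgp: "continuous_on UNIV (\<lambda>x. g (\<Phi> x))"
      using continuous_on_compose[OF cPhi, of g] cg continuous_on_subset by (force simp: o_def)
    have "(\<lambda>j. integral\<^sup>L ((\<mu> \<circ> id \<circ> r) j) (\<lambda>x. g (\<Phi> x))) \<longlonglongrightarrow> integral\<^sup>L M (\<lambda>x. g (\<Phi> x))"
    proof (rule weak_conv_imp_integral_bdd_continuous_conv)
      show "real_distribution ((\<mu> \<circ> id \<circ> r) n)" for n by (simp add: rd)
      show "real_distribution M" by fact
      show "weak_conv_m (\<mu> \<circ> id \<circ> r) M" by fact
      show "isCont (\<lambda>x. g (\<Phi> x)) x" for x using cgp by (simp add: continuous_on_eq_continuous_at)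
      show "norm (g (\<Phi> x)) \<le> Bg" for x using bg by simp
    qed
    moreover have "integral\<^sup>L ((\<mu> \<circ> id \<circ> r) j) (\<lambda>x. g (\<Phi> x)) = A (r j) g" for j
      using intmu[of "\<lambda>x. g (\<Phi> x)" "r j"] mg mPhi by (simp add: A_def Ps)
    moreover have "integral\<^sup>L M (\<lambda>x. g (\<Phi> x)) = integral\<^sup>L \<nu> g"
      unfolding \<nu>_def using mg mPhi by (subst integral_distr) auto
    ultimately show ?thesis by simp
  qed
  have inv: "integral\<^sup>L \<nu> (\<lambda>x. g (f x)) = integral\<^sup>L \<nu> g"
    if cg: "continuous_on UNIV g" and bg: "\<And>x. \<bar>g x\<bar> \<le> Bg" for g :: "real ^ 'n \<Rightarrow> real" and Bg :: real
  proof -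
    have cgf: "continuous_on UNIV (\<lambda>x. g (f x))"
      using continuous_on_compose[OF cont, of g] cg continuous_on_subset by (force simp: o_def)
    have l1: "(\<lambda>j. A (r j) (\<lambda>x. g (f x))) \<longlonglongrightarrow> integral\<^sup>L \<nu> (\<lambda>x. g (f x))"
      by (rule lim[OF cgf, of Bg]) (rule bg)
    have l2: "(\<lambda>j. A (r j) g) \<longlonglongrightarrow> integral\<^sup>L \<nu> g" by (rule lim[OF cg bg])
    have diff: "A N (\<lambda>x. g (f x)) - A N g = (g (y (Suc N)) - g (y 0)) / Suc N" for N
    proof -
      have "(\<Sum>t\<le>N. g (f (y t))) - (\<Sum>t\<le>N. g (y t)) = (\<Sum>t\<le>N. g (y (Suc t)) - g (y t))"
        by (simp add: ySuc sum_subtractf)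
      also have "\<dots> = g (y (Suc N)) - g (y 0)"
        using sum_Suc_diff[of 0 N "\<lambda>t. g (y t)"] by (simp add: atLeast0AtMost)
      finally have e: "(\<Sum>t\<le>N. g (f (y t))) - (\<Sum>t\<le>N. g (y t)) = g (y (Suc N)) - g (y 0)" .
      show ?thesis unfolding A_def diff_divide_distrib[symmetric] e ..
    qed
    have "(\<lambda>j. (g (y (Suc (r j))) - g (y 0)) / Suc (r j)) \<longlonglongrightarrow> 0"
    proof (rule Lim_null_comparison[of _ "\<lambda>j. 2 * Bg / Suc j"])
      show "\<forall>\<^sub>F j in sequentially. norm ((g (y (Suc (r j))) - g (y 0)) / Suc (r j)) \<le> 2 * Bg / Suc j"
      proof (intro always_eventually allI)
        fix j
        have "\<bar>g (y (Suc (r j))) - g (y 0)\<bar> \<le> 2 * Bg" using bg[of "y (Suc (r j))"] bg[of "y 0"] by linarith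
        moreover have "real (Suc j) \<le> real (Suc (r j))" using seq_suble[OF rM(1), of j] by simp
        moreover have "0 \<le> Bg" using bg[of x0] by linarith
        ultimately show "norm ((g (y (Suc (r j))) - g (y 0)) / Suc (r j)) \<le> 2 * Bg / Suc j"
          by (simp add: abs_divide, intro frac_le) auto
      qed
      show "(\<lambda>j. 2 * Bg / real (Suc j)) \<longlonglongrightarrow> 0"
      proof -
        have "(\<lambda>j. 2 * Bg * inverse (real j)) \<longlonglongrightarrow> 0"
          using tendsto_mult_right_zero[OF lim_inverse_n', of "2 * Bg"] by (simp add: divide_inverse)
        from LIMSEQ_Suc[OF this] show ?thesis by (simp add: divide_inverse del: of_nat_Suc)
      qed
    qed
    then have z: "(\<lambda>j. A (r j) (\<lambda>x. g (f x)) - A (r j) g) \<longlonglongrightarrow> 0" by (simp add: diff)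
    have "(\<lambda>j. A (r j) (\<lambda>x. g (f x)) - A (r j) g) \<longlonglongrightarrow> integral\<^sup>L \<nu> (\<lambda>x. g (f x)) - integral\<^sup>L \<nu> g"
      using tendsto_diff[OF l1 l2] .
    from LIMSEQ_unique[OF this z] show ?thesis by simp
  qed
  define h where "h F k x = max 0 (1 - real k * infdist x F)" for F :: "(real ^ 'n) set" and k :: nat and x
  have ch: "continuous_on UNIV (h F k)" for F k
    unfolding h_def by (intro continuous_intros continuous_on_infdist continuous_on_id)
  have bh: "\<bar>h F k x\<bar> \<le> 1" for F k x unfolding h_def by (auto simp: infdist_nonneg)
  have fnu: "finite_measure \<nu>" by (rule finite_measureI) (simp add: nu.emeasure_space_1)
  have idc: "continuous_on UNIV (\<lambda>x::real ^ 'n. x)" by (rule continuous_on_id)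
  have mK: "measure \<nu> K = 1"
  proof -
    have "(\<lambda>k. integral\<^sup>L \<nu> (h K k)) \<longlonglongrightarrow> measure \<nu> ((\<lambda>x. x) -` K)"
      unfolding h_def by (rule closed_approx[OF fnu snu compact_imp_closed[OF cK] Kne idc])
    moreover have "integral\<^sup>L \<nu> (h K k) = 1" for k
    proof -
      have "A N (h K k) = 1" for N
        using yK unfolding A_def h_def by (simp add: infdist_zero)
      then have "(\<lambda>j. A (r j) (h K k)) \<longlonglongrightarrow> 1" by simp
      from LIMSEQ_unique[OF lim[OF ch bh] this] show ?thesis .
    qed
    ultimately have "(\<lambda>k. 1::real) \<longlonglongrightarrow> measure \<nu> ((\<lambda>x. x) -` K)" by simp
    then show ?thesis by (simp add: LIMSEQ_const_iff)
  qed
  have KB: "K \<in> sets borel" using compact_imp_closed[OF cK] by simp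
  have "emeasure \<nu> (UNIV - K) = 0"
  proof -
    have "measure \<nu> (UNIV - K) = measure \<nu> UNIV - measure \<nu> K"
      using KB snu spnu nu.finite_measure_Diff[of UNIV K] by auto
    then have "measure \<nu> (UNIV - K) = 0" using mK nu.prob_space spnu by simp
    then show ?thesis using KB snu by (simp add: nu.emeasure_eq_measure)
  qed
  moreover have "distr \<nu> borel f = \<nu>"
  proof (rule measure_eqI_generator_eq[of "Collect closed" UNIV _ _ "\<lambda>_. UNIV"])
    show "Int_stable (Collect closed)" by (auto simp: Int_stable_def)
    show "Collect closed \<subseteq> Pow UNIV" by simp
    have sb: "sets borel = sigma_sets UNIV (Collect closed)"
      by (subst borel_eq_closed) (simp add: sets_measure_of)
    show "sets (distr \<nu> borel f) = sigma_sets UNIV (Collect closed)" using sb by simp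
    show "sets \<nu> = sigma_sets UNIV (Collect closed)" using sb snu by simp
    show "range (\<lambda>_. UNIV) \<subseteq> Collect closed" by auto
    show "(\<Union>i. UNIV) = UNIV" by simp
    have fm: "f \<in> measurable \<nu> borel"
      by (subst measurable_cong_sets[OF snu refl]) (use cont in \<open>auto intro: borel_measurable_continuous_onI\<close>)
    show "emeasure (distr \<nu> borel f) UNIV \<noteq> \<infinity>" for i :: nat
      using fm spnu by (simp add: emeasure_distr)
    fix F :: "(real ^ 'n) set" assume "F \<in> Collect closed"
    then have F: "closed F" by simp
    show "emeasure (distr \<nu> borel f) F = emeasure \<nu> F"
    proof (cases "F = {}")
      case True then show ?thesis by simp
    next
      case False
      have l1: "(\<lambda>k. integral\<^sup>L \<nu> (\<lambda>x. h F k (f x))) \<longlonglongrightarrow> measure \<nu> (f -` F)"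
        unfolding h_def by (rule closed_approx[OF fnu snu F False cont])
      have l2: "(\<lambda>k. integral\<^sup>L \<nu> (h F k)) \<longlonglongrightarrow> measure \<nu> ((\<lambda>x. x) -` F)"
        unfolding h_def by (rule closed_approx[OF fnu snu F False idc])
      have "integral\<^sup>L \<nu> (\<lambda>x. h F k (f x)) = integral\<^sup>L \<nu> (h F k)" for k by (rule inv[OF ch bh])
      then have "measure \<nu> (f -` F) = measure \<nu> F" using LIMSEQ_unique[OF l1] l2 by simp
      moreover have "f -` F \<in> sets \<nu>" using measurable_sets[OF fm, of F] F snu spnu by simp
      ultimately show ?thesis using fm F snu spnu
        by (simp add: emeasure_distr nu.emeasure_eq_measure)
    qed
  qed
  moreover have "emeasure \<nu> UNIV = 1" using nu.emeasure_space_1 spnu by simp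
  ultimately show ?thesis using snu fnu by (intro exI[of _ \<nu>] conjI) auto
qed


lemma no_K:
  fixes X Z :: "(real ^ 'n) set" and f :: "real ^ 'n \<Rightarrow> real ^ 'n"
  assumes cX: "compact X" and cont: "continuous_on UNIV f"
    and M: "M > 0" "\<forall>\<mu>0 \<mu>0h \<nu> \<mu>. primal_feasible X Z f \<mu>0 \<mu>0h \<nu> \<mu> \<longrightarrow> emeasure \<nu> X < ennreal M"
  shows "{x. \<forall>s. (f ^^ s) x \<in> X} = {}"
proof (rule ccontr)
  define K where "K = {x. \<forall>s. (f ^^ s) x \<in> X}"
  assume "{x. \<forall>s. (f ^^ s) x \<in> X} \<noteq> {}"
  then have Kne: "K \<noteq> {}" unfolding K_def .
  have KX: "K \<subseteq> X" unfolding K_def by (auto dest: spec[of _ 0])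
  have "closed K"
  proof -
    have "K = (\<Inter>s. (f ^^ s) -` X)" unfolding K_def by auto
    also have "closed \<dots>"
      using funpow_cont[OF cont] compact_imp_closed[OF cX] by (intro closed_INT ballI closed_vimage) auto
    finally show ?thesis .
  qed
  have UK: "UNIV - K \<in> sets borel" using \<open>closed K\<close> by (intro borel_open) (simp add: open_Diff)
  have cK: "compact K" using KX cX compact_Int_closed[of X K] \<open>closed K\<close> by (simp add: Int_absorb1)
  have fK: "f ` K \<subseteq> K" unfolding K_def
  proof clarsimp
    fix x s assume "\<forall>s. (f ^^ s) x \<in> X"
    then have "(f ^^ Suc s) x \<in> X" by blast
    then show "(f ^^ s) (f x) \<in> X" by (simp add: funpow_Suc_right del: funpow.simps)
  qed
  obtain \<nu> where nu: "sets \<nu> = sets borel" "finite_measure \<nu>" "emeasure \<nu> (UNIV - K) = 0"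
      "emeasure \<nu> UNIV = 1" "distr \<nu> borel f = \<nu>"
    using KB[OF cont cK Kne fK] by blast
  have fm: "f \<in> measurable \<nu> borel"
    by (subst measurable_cong_sets[OF nu(1) refl]) (use cont in \<open>auto intro: borel_measurable_continuous_onI\<close>)
  have spn: "space \<nu> = UNIV" using nu(1) by (metis sets_eq_imp_space_eq space_borel)
  interpret nu: finite_measure \<nu> by fact
  have nuX: "emeasure \<nu> X = 1"
  proof -
    have "emeasure \<nu> (UNIV - X) \<le> emeasure \<nu> (UNIV - K)"
      using KX nu(1) UK by (intro emeasure_mono) auto
    then have "emeasure \<nu> (UNIV - X) = 0" using nu(3) by simp
    moreover have "X \<in> sets \<nu>" using nu(1) cX by (simp add: borel_closed compact_imp_closed)
    moreover have "UNIV - X \<in> sets \<nu>" using nu(1) cX by (simp add: borel_open compact_imp_closed open_Diff)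
    ultimately have "emeasure \<nu> X + emeasure \<nu> (UNIV - X) = emeasure \<nu> (X \<union> (UNIV - X))"
      by (intro plus_emeasure) auto
    then show ?thesis using nu(4) \<open>emeasure \<nu> (UNIV - X) = 0\<close> by simp
  qed
  define nu' where "nu' = scale_measure (ennreal M) \<nu>"
  have "primal_feasible X Z f (null_measure borel) (density lborel (indicator X)) nu' (null_measure borel)"
    unfolding primal_feasible_def meas_on_def
  proof (intro conjI ballI)
    show "finite_measure (null_measure borel)" by (rule finite_measureI) simp
    show "sets nu' = sets borel" using nu(1) by (simp add: nu'_def)
    show "finite_measure nu'" using nu(4) spn by (intro finite_measureI) (simp add: nu'_def ennreal_mult_eq_top_iff)
    show "emeasure nu' (UNIV - X) = 0"
    proof -
      have "emeasure \<nu> (UNIV - X) \<le> emeasure \<nu> (UNIV - K)"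
        using KX nu(1) UK by (intro emeasure_mono) auto
      then show ?thesis using nu(3) by (simp add: nu'_def)
    qed
    show "finite_measure (density lborel (indicator X))"
    proof (rule finite_measureI)
      have "X \<in> sets borel" using cX by (simp add: borel_closed compact_imp_closed)
      then show "emeasure (density lborel (indicator X)) (space (density lborel (indicator X))) \<noteq> \<infinity>"
        using emeasure_compact_finite[OF cX] by (simp add: emeasure_restricted)
    qed
    show "emeasure (density lborel (indicator X)) (UNIV - X) = 0"
      using cX by (simp add: emeasure_restricted borel_closed compact_imp_closed)
    fix B :: "(real ^ 'n) set" assume B: "B \<in> sets borel"
    show "emeasure (null_measure borel) B + emeasure (density lborel (indicator X)) B = emeasure lborel (B \<inter> X)"
      using cX B by (simp add: emeasure_restricted borel_closed compact_imp_closed Int_commute)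
    have "emeasure (distr nu' borel f) B = emeasure nu' (f -` B)"
    proof -
      have "f \<in> measurable nu' borel" using fm by (simp add: nu'_def)
      then show ?thesis using B by (simp add: emeasure_distr nu'_def spn space_scale_measure)
    qed
    also have "\<dots> = ennreal M * emeasure (distr \<nu> borel f) B"
      using fm B by (simp add: nu'_def emeasure_distr spn)
    also have "\<dots> = emeasure nu' B" using nu(5) by (simp add: nu'_def)
    finally show "emeasure nu' B + emeasure (null_measure borel) B = emeasure (distr nu' borel f) B + emeasure (null_measure borel) B"
      by simp
  qed (auto intro!: finite_measureI)
  then have "emeasure nu' X < ennreal M" using M(2) by blast
  moreover have "emeasure nu' X = ennreal M" using nuX by (simp add: nu'_def)
  ultimately show False by simp
qed

lemma exit_T:
  fixes X :: "(real ^ 'n) set" and f :: "real ^ 'n \<Rightarrow> real ^ 'n"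
  assumes cX: "compact X" and cont: "continuous_on UNIV f"
    and K: "{x. \<forall>s. (f ^^ s) x \<in> X} = {}"
  shows "\<exists>T. \<forall>x\<in>X. \<exists>s\<le>T. (f ^^ s) x \<notin> X"
proof (rule ccontr)
  assume "\<not> ?thesis"
  then have "\<forall>T. \<exists>x\<in>X. \<forall>s\<le>T. (f ^^ s) x \<in> X" by blast
  then obtain xs where xs: "\<And>T. xs T \<in> X" "\<And>T s. s \<le> T \<Longrightarrow> (f ^^ s) (xs T) \<in> X" by metis
  obtain l r where l: "l \<in> X" "strict_mono r" "(xs \<circ> r) \<longlonglongrightarrow> l"
    using cX[unfolded compact_eq_seq_compact_metric seq_compact_def] xs(1) by metis
  have "(f ^^ s) l \<in> X" for s
  proof -
    have c: "continuous_on UNIV (f ^^ s)" by (rule funpow_cont[OF cont])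
    have lim: "(\<lambda>j. (f ^^ s) ((xs \<circ> r) j)) \<longlonglongrightarrow> (f ^^ s) l"
      using c l(3) by (intro continuous_on_tendsto_compose[OF c]) (auto simp: o_def)
    have ev: "eventually (\<lambda>j. (f ^^ s) ((xs \<circ> r) j) \<in> X) sequentially"
      unfolding eventually_sequentially
    proof (intro exI[of _ s] allI impI)
      fix j assume "s \<le> j"
      then have "s \<le> r j" using seq_suble[OF l(2), of j] by simp
      then show "(f ^^ s) ((xs \<circ> r) j) \<in> X" using xs(2) by simp
    qed
    show ?thesis by (rule Lim_in_closed_set[OF compact_imp_closed[OF cX] ev _ lim]) simp
  qed
  then show False using K by auto
qed

theorem proposition1:
  fixes X Z :: "(real ^ 'n) set" and f :: "real ^ 'n \<Rightarrow> real ^ 'n"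
  assumes "compact X" and "basic_semialgebraic X"
    and "compact Z" and "basic_semialgebraic Z" and "Z \<subseteq> X"
    and "poly_map f"
    and "\<exists>M::real. M > 0 \<and> (\<forall>\<mu>0 \<mu>0h \<nu> \<mu>. primal_feasible X Z f \<mu>0 \<mu>0h \<nu> \<mu> \<longrightarrow> emeasure \<nu> X < ennreal M)"
  shows "(f ` X \<subseteq> X \<longrightarrow>
            (\<exists>\<mu>0 \<mu>0h \<nu> \<mu>. primal_feasible X Z f \<mu>0 \<mu>0h \<nu> \<mu> \<and>
               (\<forall>B\<in>sets borel. emeasure \<mu>0 B = emeasure lborel (B \<inter> backreach_inf X Z f)) \<and>
               measure \<mu>0 X = primal_value X Z f) \<and>
            primal_value X Z f = measure lborel (backreach_inf X Z f))
       \<and> primal_value X Z f = dual_value X Z f"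
proof -
  obtain M :: real where M: "M > 0" "\<forall>\<mu>0 \<mu>0h \<nu> \<mu>. primal_feasible X Z f \<mu>0 \<mu>0h \<nu> \<mu> \<longrightarrow> emeasure \<nu> X < ennreal M"
    using assms(7) by blast
  have cont: "continuous_on UNIV f" using poly_map_cont[OF assms(6)] .
  have K: "{x. \<forall>s. (f ^^ s) x \<in> X} = {}" by (rule no_K[OF assms(1) cont M])
  obtain T where T: "\<forall>x\<in>X. \<exists>s\<le>T. (f ^^ s) x \<notin> X" using exit_T[OF assms(1) cont K] by blast
  interpret S: setting X Z f T
    using assms(1,3,5) cont T by unfold_locales auto
  have pv: "primal_value X Z f = measure lborel (backreach_inf X Z f)"
    using S.primal_val S.binf by simp
  have m0: "measure S.m0P X = primal_value X Z f"
  proof -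
    have "emeasure S.m0P X = emeasure lborel S.R" using S.R_X[of T] by (simp add: S.m0P Int_absorb1)
    then show ?thesis using S.primal_val by (simp add: measure_def)
  qed
  show ?thesis
  proof (intro conjI impI)
    show "\<exists>\<mu>0 \<mu>0h \<nu> \<mu>. primal_feasible X Z f \<mu>0 \<mu>0h \<nu> \<mu> \<and>
               (\<forall>B\<in>sets borel. emeasure \<mu>0 B = emeasure lborel (B \<inter> backreach_inf X Z f)) \<and>
               measure \<mu>0 X = primal_value X Z f"
    proof (intro exI conjI ballI)
      show "primal_feasible X Z f S.m0P S.m0hP S.nuP S.muP" by (rule S.P2)
      show "measure S.m0P X = primal_value X Z f" by (rule m0)
      fix B :: "(real ^ 'n) set" assume "B \<in> sets borel"
      then show "emeasure S.m0P B = emeasure lborel (B \<inter> backreach_inf X Z f)"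
        by (simp add: S.m0P S.binf)
    qed
    show "primal_value X Z f = measure lborel (backreach_inf X Z f)" by (rule pv)
    show "primal_value X Z f = dual_value X Z f" using S.primal_val S.dual_val by simp
  qed
qed


end
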